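(* Let $f\in\mathbb C[x_1,\dots,x_n]$ be nonzero and $\ell\in\mathbb N$. Then the small Gröbner fan of the ideal $\mathrm{Ann}(1/f^\ell)$ is a subdivision (refinement) of the fan $\Sigma_{f^\ell}$. Moreover, for every $\omega\in\mathbb R^n\setminus\{0\}$, the b-function $b_{\mathrm{Ann}(1/f_{\tau_\omega}^\ell),\omega}(s)$ divides $b_{\mathrm{Ann}(1/f^\ell),\omega}(s)$.
   Context: $D_n$ is the $n$-th Weyl algebra ($\partial_ix_j=x_j\partial_i+\delta_{ij}$); ideals are left ideals. For $\omega\in\mathbb R^n$, the $(-\omega,\omega)$-weight of $x^\alpha\partial^\beta$ is $-\langle\omega,\alpha\rangle+\langle\omega,\beta\rangle$; $\mathrm{in}_{(-\omega,\omega)}(P)$ is the sum of the terms of maximal weight of the normally ordered expression of $P$, and $\mathrm{in}_{(-\omega,\omega)}(I)$ is the left ideal generated by the $\mathrm{in}_{(-\omega,\omega)}(P)$, $P\in I\setminus\{0\}$. For a holonomic ideal $I$ and $\omega\neq0$, with $s=\sum_i\omega_ix_i\partial_i$, $b_{I,\omega}(s)$ is the monic generator of $\mathrm{in}_{(-\omega,\omega)}(I)\cap\mathbb C[s]$. The small Gröbner fan of $I$ is the fan $\Sigma$ in $\mathbb R^n$ such that $\mathrm{in}_{(-\omega,\omega)}(I)$ is constant for $\omega$ in the relative interior of each cone of $\Sigma$, distinct cones corresponding to distinct initial ideals. For a nonzero rational function $g$, $\mathrm{Ann}(g)=\{P\in D_n:P\bullet g=0\}$ ($x_i\bullet g=x_ig$,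 $\partial_i\bullet g=\partial g/\partial x_i$). For $f=\sum_\gamma c_\gamma x^\gamma$: $\Gamma(f)$ is the convex hull of $\mathrm{Supp}(f)=\{\gamma:c_\gamma\ne0\}$, $\mathrm{ord}_f(\omega)=\min\{\langle\gamma,\omega\rangle:\gamma\in\Gamma(f)\}$, $\tau_\omega=\{u\in\Gamma(f):\langle u,\omega\rangle=\mathrm{ord}_f(\omega)\}$, $f_\tau=\sum_{\gamma\in\tau\cap\mathrm{Supp}(f)}c_\gamma x^\gamma$; for a face $\tau$, $C_\tau=\{\omega:\langle u,\omega\rangle=\mathrm{ord}_f(\omega)\ \forall u\in\tau\}$, and $\Sigma_f$ is the fan of all $C_\tau$. $\mathbb N=\{0,1,2,\dots\}$. *)

theory Defs
  imports "HOL-Analysis.Analysis" "HOL-Library.Poly_Mapping" "HOL-Computational_Algebra.Polynomial"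
begin

type_synonym 'n mono = "'n \<Rightarrow>\<^sub>0 nat"
type_synonym 'n mpoly = "'n mono \<Rightarrow>\<^sub>0 complex"
text \<open>Weyl algebra element in normal order: coefficient of x^alpha d^beta at (alpha, beta).\<close>
type_synonym 'n weyl = "('n mono \<times> 'n mono) \<Rightarrow>\<^sub>0 complex"

definition unitv :: "'n \<Rightarrow> 'n mono" where
  "unitv i = Poly_Mapping.single i 1"

definition xmono :: "'n mono \<Rightarrow> 'n mpoly" where
  "xmono a = Poly_Mapping.single a 1"

definition cmul :: "complex \<Rightarrow> 'n mpoly \<Rightarrow> 'n mpoly" where
  "cmul c p = Poly_Mapping.map (\<lambda>z. c * z) p"

definition pderiv_mp :: "'n \<Rightarrow> 'n mpoly \<Rightarrow> 'n mpoly" where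
  "pderiv_mp i p = (\<Sum>a\<in>Poly_Mapping.keys p.
      Poly_Mapping.single (a - unitv i) (Poly_Mapping.lookup p a * of_nat (Poly_Mapping.lookup (a :: 'n mono) i)))"

definition tdeg :: "'n::finite mono \<Rightarrow> nat" where
  "tdeg b = (\<Sum>i\<in>UNIV. Poly_Mapping.lookup b i)"

text \<open>(x^a d^b)(x^c d^d) = sum_k prod_i k_i! C(b_i,k_i) C(c_i,k_i) x^(a+c-k) d^(b+d-k)\<close>
definition weyl_mono_mult :: "'n::finite mono \<Rightarrow> 'n mono \<Rightarrow> 'n mono \<Rightarrow> 'n mono \<Rightarrow> 'n weyl" where
  "weyl_mono_mult a b c d =
     (\<Sum>k\<in>{k. \<forall>i. Poly_Mapping.lookup k i \<le> Poly_Mapping.lookup b i \<and> Poly_Mapping.lookup k i \<le> Poly_Mapping.lookup c i}.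
        Poly_Mapping.single (a + c - k, b + d - k)
          (of_nat (\<Prod>i\<in>UNIV. fact (Poly_Mapping.lookup k i) * (Poly_Mapping.lookup b i choose Poly_Mapping.lookup k i)
                                 * (Poly_Mapping.lookup c i choose Poly_Mapping.lookup k i))))"

definition weyl_mult :: "'n::finite weyl \<Rightarrow> 'n weyl \<Rightarrow> 'n weyl" where
  "weyl_mult P Q = (\<Sum>(a,b)\<in>Poly_Mapping.keys P. \<Sum>(c,d)\<in>Poly_Mapping.keys Q.
      Poly_Mapping.map (\<lambda>z. Poly_Mapping.lookup P (a,b) * Poly_Mapping.lookup Q (c,d) * z) (weyl_mono_mult a b c d))"

definition weyl_one :: "'n weyl" where
  "weyl_one = Poly_Mapping.single (0, 0) 1"

primrec weyl_pow :: "'n::finite weyl \<Rightarrow> nat \<Rightarrow> 'n weyl" where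
  "weyl_pow s 0 = weyl_one"
| "weyl_pow s (Suc k) = weyl_mult s (weyl_pow s k)"

inductive_set left_ideal_gen :: "'n::finite weyl set \<Rightarrow> 'n weyl set" for S where
  zero: "0 \<in> left_ideal_gen S"
| gen: "g \<in> S \<Longrightarrow> g \<in> left_ideal_gen S"
| add: "a \<in> left_ideal_gen S \<Longrightarrow> b \<in> left_ideal_gen S \<Longrightarrow> a + b \<in> left_ideal_gen S"
| lmult: "a \<in> left_ideal_gen S \<Longrightarrow> weyl_mult Q a \<in> left_ideal_gen S"

definition vec_of :: "'n::finite mono \<Rightarrow> real^'n" where
  "vec_of a = (\<chi> i. real (Poly_Mapping.lookup a i))"

definition wt :: "real^'n \<Rightarrow> ('n::finite mono \<times> 'n mono) \<Rightarrow> real" where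
  "wt w ab = (\<Sum>i\<in>UNIV. w $ i * (real (Poly_Mapping.lookup (snd ab) i) - real (Poly_Mapping.lookup (fst ab) i)))"

definition init_form :: "real^'n \<Rightarrow> 'n::finite weyl \<Rightarrow> 'n weyl" where
  "init_form w P = (let m = Max (wt w ` Poly_Mapping.keys P) in
      (\<Sum>k\<in>{k\<in>Poly_Mapping.keys P. wt w k = m}. Poly_Mapping.single k (Poly_Mapping.lookup P k)))"

definition init_ideal :: "real^'n \<Rightarrow> 'n::finite weyl set \<Rightarrow> 'n weyl set" where
  "init_ideal w I = left_ideal_gen {init_form w P | P. P \<in> I \<and> P \<noteq> 0}"

definition euler_s :: "real^'n \<Rightarrow> 'n::finite weyl" where
  "euler_s w = (\<Sum>i\<in>UNIV. Poly_Mapping.single (unitv i, unitv i) (complex_of_real (w $ i)))"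

definition poly_at_s :: "real^'n \<Rightarrow> complex poly \<Rightarrow> 'n::finite weyl" where
  "poly_at_s w p = (\<Sum>k\<le>degree p.
      weyl_mult (Poly_Mapping.single (0,0) (coeff p k)) (weyl_pow (euler_s w) k))"

definition bfun :: "'n::finite weyl set \<Rightarrow> real^'n \<Rightarrow> complex poly" where
  "bfun I w = (THE b. {p. poly_at_s w p \<in> init_ideal w I} = {p. b dvd p}
                      \<and> (b = 0 \<or> lead_coeff b = 1))"

text \<open>d_i (h / q^m) = (d_i h * q - m h d_i q) / q^(m+1); pairs (h,m) stand for h/q^m\<close>
definition dstep :: "'n mpoly \<Rightarrow> 'n \<Rightarrow> 'n mpoly \<times> nat \<Rightarrow> 'n mpoly \<times> nat" where
  "dstep q i hm = (pderiv_mp i (fst hm) * q - of_nat (snd hm) * fst hm * pderiv_mp i q,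
                   Suc (snd hm))"

definition var_list :: "'n::finite list" where
  "var_list = (SOME xs. set xs = UNIV \<and> distinct xs)"

text \<open>d^b (1/q^l) as a pair (h, l + |b|)\<close>
definition dpow_inv :: "'n::finite mpoly \<Rightarrow> nat \<Rightarrow> 'n mono \<Rightarrow> 'n mpoly \<times> nat" where
  "dpow_inv q l b = foldr (\<lambda>i. dstep q i ^^ Poly_Mapping.lookup b i) var_list (1, l)"

text \<open>P \<bullet> (1/q^l) = 0, cleared of denominators (q \<noteq> 0 and C[x] is a domain)\<close>
definition annihilates :: "'n::finite weyl \<Rightarrow> 'n mpoly \<Rightarrow> nat \<Rightarrow> bool" where
  "annihilates P q l = (let N = (\<Sum>(a,b)\<in>Poly_Mapping.keys P. snd (dpow_inv q l b)) in
     (\<Sum>(a,b)\<in>Poly_Mapping.keys P. cmul (Poly_Mapping.lookup P (a,b))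
         (xmono a * fst (dpow_inv q l b) * q ^ (N - snd (dpow_inv q l b)))) = 0)"

definition Ann_inv_pow :: "'n::finite mpoly \<Rightarrow> nat \<Rightarrow> 'n weyl set" where
  "Ann_inv_pow q l = {P. annihilates P q l}"

definition newton :: "'n::finite mpoly \<Rightarrow> (real^'n) set" where
  "newton f = convex hull (vec_of ` Poly_Mapping.keys f)"

definition ord_f :: "'n::finite mpoly \<Rightarrow> real^'n \<Rightarrow> real" where
  "ord_f f w = Inf ((\<lambda>u. inner u w) ` newton f)"

definition tau :: "'n::finite mpoly \<Rightarrow> real^'n \<Rightarrow> (real^'n) set" where
  "tau f w = {u \<in> newton f. inner u w = ord_f f w}"

definition face_part :: "'n::finite mpoly \<Rightarrow> (real^'n) set \<Rightarrow> 'n mpoly" where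
  "face_part f t = (\<Sum>a\<in>{a\<in>Poly_Mapping.keys f. vec_of a \<in> t}. Poly_Mapping.single a (Poly_Mapping.lookup f a))"

definition normal_cone :: "'n::finite mpoly \<Rightarrow> (real^'n) set \<Rightarrow> (real^'n) set" where
  "normal_cone f t = {w. \<forall>u\<in>t. inner u w = ord_f f w}"

definition newton_fan :: "'n::finite mpoly \<Rightarrow> (real^'n) set set" where
  "newton_fan f = {normal_cone f t | t. t face_of newton f \<and> t \<noteq> {}}"

definition is_fan :: "(real^'n::finite) set set \<Rightarrow> bool" where
  "is_fan F \<longleftrightarrow> finite F \<and> {} \<notin> F \<and> (\<forall>C\<in>F. polyhedron C \<and> cone C)
     \<and> (\<forall>C\<in>F. \<forall>D. D face_of C \<and> D \<noteq> {} \<longrightarrow> D \<in> F)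
     \<and> (\<forall>C\<in>F. \<forall>D\<in>F. (C \<inter> D) face_of C \<and> (C \<inter> D) face_of D)"

definition is_small_groebner_fan :: "'n::finite weyl set \<Rightarrow> (real^'n) set set \<Rightarrow> bool" where
  "is_small_groebner_fan I F \<longleftrightarrow> is_fan F \<and> \<Union>F = UNIV
     \<and> (\<forall>C\<in>F. \<forall>w\<in>rel_interior C. \<forall>w'\<in>rel_interior C. init_ideal w I = init_ideal w' I)
     \<and> (\<forall>C\<in>F. \<forall>D\<in>F. C \<noteq> D \<longrightarrow>
          (\<forall>w\<in>rel_interior C. \<forall>w'\<in>rel_interior D. init_ideal w I \<noteq> init_ideal w' I))"

definition refines :: "(real^'n::finite) set set \<Rightarrow> (real^'n) set set \<Rightarrow> bool" where
  "refines F G \<longleftrightarrow> \<Union>F = \<Union>G \<and> (\<forall>C\<in>F. \<exists>D\<in>G. C \<subseteq> D)"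

end

theory Submission
  imports Defs "HOL-Computational_Algebra.Fraction_Field"
begin

lemma mp_sum_mono: "(p::'a \<Rightarrow>\<^sub>0 'b::comm_monoid_add) = (\<Sum>a\<in>Poly_Mapping.keys p. Poly_Mapping.single a (Poly_Mapping.lookup p a))"
  by (rule poly_mapping_eqI) (simp add: lookup_sum lookup_single when_def in_keys_iff split: if_splits)

lemma lookup_cmul [simp]: "Poly_Mapping.lookup (cmul c p) k = c * Poly_Mapping.lookup p k"
  by (simp add: cmul_def Poly_Mapping.map.rep_eq when_def)

lemma cmul_conv: "cmul c p = Poly_Mapping.single 0 c * p"
  unfolding cmul_def by (rule mult_map_scale_conv_mult)

definition wtm :: "real^'n \<Rightarrow> 'n::finite mono \<Rightarrow> real" where
  "wtm w a = inner (vec_of a) w"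

lemma vec_of_add: "vec_of (a + b) = vec_of a + vec_of b"
  by (simp add: vec_of_def vec_eq_iff lookup_add)

lemma vec_of_zero [simp]: "vec_of 0 = 0"
  by (simp add: vec_of_def vec_eq_iff)

lemma wtm_add: "wtm w (a + b) = wtm w a + wtm w b"
  by (simp add: wtm_def vec_of_add inner_add_left)

lemma wtm_zero [simp]: "wtm w 0 = 0"
  by (simp add: wtm_def)

lemma wtm_sum: "wtm w a = (\<Sum>i\<in>UNIV. real (Poly_Mapping.lookup a i) * w $ i)"
  by (simp add: wtm_def vec_of_def inner_vec_def)

lemma wt_conv: "wt w (a, b) = wtm w b - wtm w a"
  by (simp add: wt_def wtm_sum right_diff_distrib sum_subtractf mult.commute)

lemma lookup_unitv: "Poly_Mapping.lookup (unitv i) j = (if i = j then 1 else 0)"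
  by (simp add: unitv_def lookup_single when_def)

lemma wtm_minus_unitv: "Poly_Mapping.lookup a i \<ge> 1 \<Longrightarrow> wtm w (a - unitv i) = wtm w a - w $ i"
proof -
  assume h: "Poly_Mapping.lookup a i \<ge> 1"
  have "a = (a - unitv i) + unitv i"
    by (rule poly_mapping_eqI) (use h in \<open>auto simp add: lookup_add lookup_minus lookup_unitv\<close>)
  then have "wtm w a = wtm w (a - unitv i) + wtm w (unitv i)" by (metis wtm_add)
  moreover have "wtm w (unitv i) = w $ i"
  proof -
    have "wtm w (unitv i) = (\<Sum>j\<in>UNIV. if i = j then w $ j else 0)"
      unfolding wtm_sum by (rule sum.cong) (auto simp: lookup_unitv)
    then show ?thesis by simp
  qed
  ultimately show ?thesis by simp
qed

section \<open>weighted wparts\<close>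

definition wpart :: "real^'n \<Rightarrow> real \<Rightarrow> 'n::finite mpoly \<Rightarrow> 'n mpoly" where
  "wpart w d p = (\<Sum>a\<in>{a\<in>Poly_Mapping.keys p. wtm w a = d}. Poly_Mapping.single a (Poly_Mapping.lookup p a))"

lemma lookup_wpart: "Poly_Mapping.lookup (wpart w d p) a = (if wtm w a = d then Poly_Mapping.lookup p a else 0)"
  by (simp add: wpart_def lookup_sum lookup_single when_def in_keys_iff split: if_splits)

lemma wpart_alt: "wpart w d p = (\<Sum>a\<in>Poly_Mapping.keys p. if wtm w a = d then Poly_Mapping.single a (Poly_Mapping.lookup p a) else 0)"
  unfolding wpart_def by (simp add: sum.inter_filter)

lemma wpart_add: "wpart w d (p + q) = wpart w d p + wpart w d q"
  by (rule poly_mapping_eqI) (simp add: lookup_wpart lookup_add)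
lemma wpart_diff: "wpart w d (p - q) = wpart w d p - wpart w d q"
  by (rule poly_mapping_eqI) (simp add: lookup_wpart lookup_minus)
lemma wpart_uminus: "wpart w d (- p) = - wpart w d p"
  by (rule poly_mapping_eqI) (simp add: lookup_wpart)
lemma wpart_zero [simp]: "wpart w d 0 = 0"
  by (rule poly_mapping_eqI) (simp add: lookup_wpart)
lemma wpart_sum: "wpart w d (sum g S) = (\<Sum>x\<in>S. wpart w d (g x))"
  by (rule poly_mapping_eqI) (simp add: lookup_wpart lookup_sum)
lemma wpart_cmul: "wpart w d (cmul c p) = cmul c (wpart w d p)"
  by (rule poly_mapping_eqI) (simp add: lookup_wpart)
lemma wpart_single: "wpart w d (Poly_Mapping.single a c) = (if wtm w a = d then Poly_Mapping.single a c else 0)"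
  by (rule poly_mapping_eqI) (simp add: lookup_wpart lookup_single when_def)

definition geq :: "real^'n \<Rightarrow> real \<Rightarrow> 'n::finite mpoly \<Rightarrow> bool" where
  "geq w d p \<longleftrightarrow> (\<forall>a\<in>Poly_Mapping.keys p. d \<le> wtm w a)"

lemma geq_zero [simp]: "geq w d 0" by (simp add: geq_def)
lemma geq_mono: "geq w d p \<Longrightarrow> d' \<le> d \<Longrightarrow> geq w d' p"
  by (force simp: geq_def)
lemma geq_add: "geq w d p \<Longrightarrow> geq w d q \<Longrightarrow> geq w d (p + q)"
  using keys_add[of p q] by (force simp: geq_def)
lemma geq_uminus: "geq w d p \<Longrightarrow> geq w d (- p)"
  by (simp add: geq_def)
lemma geq_diff: "geq w d p \<Longrightarrow> geq w d q \<Longrightarrow> geq w d (p - q)"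
  using geq_add[of w d p "-q"] geq_uminus[of w d q] by simp
lemma geq_cmul: "geq w d p \<Longrightarrow> geq w d (cmul c p)"
  by (auto simp: geq_def in_keys_iff)
lemma geq_sum: "(\<And>x. x \<in> S \<Longrightarrow> geq w d (g x)) \<Longrightarrow> geq w d (sum g S)"
  unfolding geq_def by (auto dest!: keys_sum[THEN subsetD])
lemma geq_single: "wtm w a \<ge> d \<Longrightarrow> geq w d (Poly_Mapping.single a c)"
  by (simp add: geq_def)

lemma wpart_low: assumes "geq w d p" "d' < d" shows "wpart w d' p = 0"
proof (rule poly_mapping_eqI)
  fix a
  show "Poly_Mapping.lookup (wpart w d' p) a = Poly_Mapping.lookup 0 a"
  proof (cases "a \<in> Poly_Mapping.keys p")
    case True then have "d \<le> wtm w a" using assms(1) by (simp add: geq_def)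
    then show ?thesis using assms(2) by (simp add: lookup_wpart)
  next
    case False then show ?thesis by (simp add: lookup_wpart in_keys_iff)
  qed
qed

lemma wpart_self: "(\<forall>a\<in>Poly_Mapping.keys p. wtm w a = d) \<Longrightarrow> wpart w d p = p"
  by (rule poly_mapping_eqI) (metis in_keys_iff lookup_wpart)

lemma mult_sum_mono: "(p::'n::finite mpoly) * q = (\<Sum>a\<in>Poly_Mapping.keys p. \<Sum>b\<in>Poly_Mapping.keys q.
    Poly_Mapping.single (a + b) (Poly_Mapping.lookup p a * Poly_Mapping.lookup q b))"
proof -
  have "p * q = (\<Sum>a\<in>Poly_Mapping.keys p. Poly_Mapping.single a (Poly_Mapping.lookup p a)) *
     (\<Sum>b\<in>Poly_Mapping.keys q. Poly_Mapping.single b (Poly_Mapping.lookup q b))"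
    using mp_sum_mono[of p] mp_sum_mono[of q] by simp
  also have "\<dots> = (\<Sum>a\<in>Poly_Mapping.keys p. \<Sum>b\<in>Poly_Mapping.keys q.
    Poly_Mapping.single (a + b) (Poly_Mapping.lookup p a * Poly_Mapping.lookup q b))"
    by (simp add: sum_product mult_single)
  finally show ?thesis .
qed

lemma geq_mult: "geq w d1 p \<Longrightarrow> geq w d2 q \<Longrightarrow> geq w (d1 + d2) (p * q)"
  using keys_mult[of p q] by (force simp: geq_def wtm_add intro: add_mono)

lemma wpart_mult: assumes "geq w d1 p" "geq w d2 q"
  shows "wpart w (d1 + d2) (p * q) = wpart w d1 p * wpart w d2 q"
proof -
  have "wpart w (d1 + d2) (p * q) = (\<Sum>a\<in>Poly_Mapping.keys p. \<Sum>b\<in>Poly_Mapping.keys q.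
    if wtm w a = d1 \<and> wtm w b = d2 then Poly_Mapping.single (a + b) (Poly_Mapping.lookup p a * Poly_Mapping.lookup q b) else 0)"
    unfolding mult_sum_mono[of p q] wpart_sum wpart_single
  proof (intro sum.cong refl)
    fix a b assume "a \<in> Poly_Mapping.keys p" "b \<in> Poly_Mapping.keys q"
    then have "d1 \<le> wtm w a" "d2 \<le> wtm w b" using assms by (auto simp: geq_def)
    then have "(wtm w (a + b) = d1 + d2) = (wtm w a = d1 \<and> wtm w b = d2)"
      by (auto simp: wtm_add)
    then show "(if wtm w (a + b) = d1 + d2 then Poly_Mapping.single (a + b) (Poly_Mapping.lookup p a * Poly_Mapping.lookup q b) else 0) =
      (if wtm w a = d1 \<and> wtm w b = d2 then Poly_Mapping.single (a + b) (Poly_Mapping.lookup p a * Poly_Mapping.lookup q b) else 0)"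
      by simp
  qed
  also have "\<dots> = wpart w d1 p * wpart w d2 q"
    unfolding wpart_alt sum_product by (intro sum.cong refl) (simp add: mult_single)
  finally show ?thesis .
qed

lemma geq_of_nat: "geq w 0 (of_nat m)"
  by (metis geq_single order_refl single_of_nat wtm_zero)
lemma wpart_one: "wpart w 0 1 = 1"
  by (metis single_one wpart_single wtm_zero)

lemma wpart_of_nat: "wpart w 0 (of_nat m) = of_nat m"
  by (metis single_of_nat wpart_single wtm_zero)

lemma geq_power: "geq w d p \<Longrightarrow> geq w (real k * d) (p ^ k)"
proof (induction k)
  case 0 then show ?case by (simp add: geq_def)
next
  case (Suc k) then show ?case using geq_mult[of w d p "real k * d" "p^k"] by (simp add: algebra_simps)
qed

lemma wpart_power: "geq w d p \<Longrightarrow> wpart w (real k * d) (p ^ k) = (wpart w d p) ^ k"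
proof (induction k)
  case 0 then show ?case by (simp add: wpart_one)
next
  case (Suc k)
  have "wpart w (d + real k * d) (p * p ^ k) = wpart w d p * wpart w (real k * d) (p ^ k)"
    by (rule wpart_mult) (use Suc geq_power in auto)
  then show ?case using Suc by (simp add: algebra_simps)
qed

section \<open>derivatives\<close>

lemma pderiv_sum_gen: "finite S \<Longrightarrow> Poly_Mapping.keys p \<subseteq> S \<Longrightarrow>
  pderiv_mp i p = (\<Sum>a\<in>S. Poly_Mapping.single (a - unitv i) (Poly_Mapping.lookup p a * of_nat (Poly_Mapping.lookup a i)))"
  unfolding pderiv_mp_def by (rule sum.mono_neutral_left) (auto simp: in_keys_iff)

lemma pderiv_add: "pderiv_mp i (p + q) = pderiv_mp i p + pderiv_mp i q"
proof -
  let ?S = "Poly_Mapping.keys p \<union> Poly_Mapping.keys q"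
  have "pderiv_mp i (p + q) = (\<Sum>a\<in>?S. Poly_Mapping.single (a - unitv i) (Poly_Mapping.lookup (p+q) a * of_nat (Poly_Mapping.lookup a i)))"
    by (rule pderiv_sum_gen) (auto simp: keys_add)
  also have "\<dots> = pderiv_mp i p + pderiv_mp i q"
    by (simp add: pderiv_sum_gen[of ?S p] pderiv_sum_gen[of ?S q] lookup_add distrib_right single_add sum.distrib)
  finally show ?thesis .
qed

lemma pderiv_zero [simp]: "pderiv_mp i 0 = 0"
  by (simp add: pderiv_mp_def)

lemma pderiv_uminus: "pderiv_mp i (- p) = - pderiv_mp i p"
  using pderiv_add[of i "-p" p] by (simp add: eq_neg_iff_add_eq_0)

lemma pderiv_diff: "pderiv_mp i (p - q) = pderiv_mp i p - pderiv_mp i q"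
  using pderiv_add[of i p "-q"] by (simp add: pderiv_uminus)

lemma pderiv_sum: "pderiv_mp i (sum g S) = (\<Sum>x\<in>S. pderiv_mp i (g x))"
  by (induction S rule: infinite_finite_induct) (auto simp: pderiv_add)

lemma pderiv_single: "pderiv_mp i (Poly_Mapping.single a c) = Poly_Mapping.single (a - unitv i) (c * of_nat (Poly_Mapping.lookup a i))"
  by (subst pderiv_sum_gen[of "{a}"]) auto

lemma pderiv_cmul: "pderiv_mp i (cmul c p) = cmul c (pderiv_mp i p)"
proof -
  have "pderiv_mp i (cmul c p) = (\<Sum>a\<in>Poly_Mapping.keys p. Poly_Mapping.single (a - unitv i) (Poly_Mapping.lookup (cmul c p) a * of_nat (Poly_Mapping.lookup a i)))"
    by (rule pderiv_sum_gen) (auto simp: in_keys_iff)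
  also have "\<dots> = cmul c (pderiv_mp i p)"
    by (rule poly_mapping_eqI) (simp add: pderiv_mp_def lookup_sum lookup_single when_def sum_distrib_left mult.assoc if_distrib cong: if_cong)
  finally show ?thesis .
qed

lemma geq_pderiv_wpart: assumes "geq w d p"
  shows "geq w (d - w $ i) (pderiv_mp i p) \<and> wpart w (d - w $ i) (pderiv_mp i p) = pderiv_mp i (wpart w d p)"
proof -
  have key: "\<And>a. a \<in> Poly_Mapping.keys p \<Longrightarrow> Poly_Mapping.lookup a i \<noteq> 0 \<Longrightarrow>
     wtm w (a - unitv i) = wtm w a - w $ i"
    by (rule wtm_minus_unitv) simp
  have g: "geq w (d - w $ i) (pderiv_mp i p)"
    unfolding pderiv_mp_def
  proof (rule geq_sum)
    fix a assume a: "a \<in> Poly_Mapping.keys p"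
    show "geq w (d - w $ i) (Poly_Mapping.single (a - unitv i) (Poly_Mapping.lookup p a * of_nat (Poly_Mapping.lookup a i)))"
    proof (cases "Poly_Mapping.lookup a i = 0")
      case True then show ?thesis by simp
    next
      case False then show ?thesis using key[OF a False] a assms by (intro geq_single) (auto simp: geq_def)
    qed
  qed
  have "wpart w (d - w $ i) (pderiv_mp i p) = (\<Sum>a\<in>Poly_Mapping.keys p.
      if wtm w a = d then Poly_Mapping.single (a - unitv i) (Poly_Mapping.lookup p a * of_nat (Poly_Mapping.lookup a i)) else 0)"
    unfolding pderiv_mp_def wpart_sum wpart_single
  proof (intro sum.cong refl)
    fix a assume a: "a \<in> Poly_Mapping.keys p"
    show "(if wtm w (a - unitv i) = d - w $ i then Poly_Mapping.single (a - unitv i) (Poly_Mapping.lookup p a * of_nat (Poly_Mapping.lookup a i)) else 0) =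
       (if wtm w a = d then Poly_Mapping.single (a - unitv i) (Poly_Mapping.lookup p a * of_nat (Poly_Mapping.lookup a i)) else 0)"
      using key[OF a] by (cases "Poly_Mapping.lookup a i = 0") auto
  qed
  also have "\<dots> = pderiv_mp i (wpart w d p)"
    unfolding wpart_alt pderiv_sum by (intro sum.cong refl) (simp add: pderiv_single)
  finally show ?thesis using g by simp
qed

lemma vec_of_inj: "vec_of a = vec_of b \<Longrightarrow> a = b"
  by (rule poly_mapping_eqI) (simp add: vec_of_def vec_eq_iff)

lemma generic_weight: assumes "finite (S :: 'n::finite mono set)" shows "\<exists>w. inj_on (wtm w) S"
proof -
  let ?H = "(\<lambda>(a,b). {w::real^'n. (vec_of a - vec_of b) \<bullet> w = 0}) ` {(a,b). a \<in> S \<and> b \<in> S \<and> a \<noteq> b}"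
  have fin: "finite {(a,b). a \<in> S \<and> b \<in> S \<and> a \<noteq> b}"
    by (rule finite_subset[of _ "S \<times> S"]) (use assms in auto)
  have "negligible (\<Union>?H)"
  proof (rule negligible_Union)
    show "finite ?H" using fin by simp
  next
    fix T assume "T \<in> ?H"
    then obtain a b where ab: "a \<in> S" "b \<in> S" "a \<noteq> b" and T: "T = {w::real^'n. (vec_of a - vec_of b) \<bullet> w = 0}" by auto
    have "vec_of a - vec_of b \<noteq> 0" using ab vec_of_inj by auto
    then show "negligible T" unfolding T by (intro negligible_hyperplane) simp
  qed
  then have "\<Union>?H \<noteq> UNIV" by auto
  then obtain w where w: "w \<notin> \<Union>?H" by auto
  have "inj_on (wtm w) S"
  proof (rule inj_onI)
    fix a b assume ab: "a \<in> S" "b \<in> S" "wtm w a = wtm w b"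
    show "a = b"
    proof (rule ccontr)
      assume "a \<noteq> b"
      then have "w \<in> \<Union>?H" using ab by (auto simp: wtm_def inner_diff_left)
      then show False using w by simp
    qed
  qed
  then show ?thesis by blast
qed

lemma Min_wtm_props: assumes "(p::'n::finite mpoly) \<noteq> 0"
  shows "geq w (Min (wtm w ` Poly_Mapping.keys p)) p"
    "\<exists>a\<in>Poly_Mapping.keys p. wtm w a = Min (wtm w ` Poly_Mapping.keys p)"
proof -
  have ne: "Poly_Mapping.keys p \<noteq> {}" using assms by simp
  show "geq w (Min (wtm w ` Poly_Mapping.keys p)) p" by (simp add: geq_def)
  show "\<exists>a\<in>Poly_Mapping.keys p. wtm w a = Min (wtm w ` Poly_Mapping.keys p)"
  proof -
    have "Min (wtm w ` Poly_Mapping.keys p) \<in> wtm w ` Poly_Mapping.keys p"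
      by (rule Min_in) (use ne in auto)
    then show ?thesis by (metis (no_types, lifting) imageE)
  qed
qed

lemma wpart_Min_nonzero: assumes "(p::'n::finite mpoly) \<noteq> 0"
  shows "wpart w (Min (wtm w ` Poly_Mapping.keys p)) p \<noteq> 0"
proof -
  obtain a where a: "a \<in> Poly_Mapping.keys p" "wtm w a = Min (wtm w ` Poly_Mapping.keys p)"
    using Min_wtm_props[OF assms] by blast
  then have "Poly_Mapping.lookup (wpart w (Min (wtm w ` Poly_Mapping.keys p)) p) a \<noteq> 0"
    by (simp add: lookup_wpart in_keys_iff)
  then show ?thesis by auto
qed

lemma mp_mult_nonzero: assumes "(p::'n::finite mpoly) \<noteq> 0" "q \<noteq> 0" shows "p * q \<noteq> 0"
proof -
  obtain w where w: "inj_on (wtm w) (Poly_Mapping.keys p \<union> Poly_Mapping.keys q)"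
    using generic_weight[of "Poly_Mapping.keys p \<union> Poly_Mapping.keys q"] by auto
  define d1 where "d1 = Min (wtm w ` Poly_Mapping.keys p)"
  define d2 where "d2 = Min (wtm w ` Poly_Mapping.keys q)"
  obtain a where a: "a \<in> Poly_Mapping.keys p" "wtm w a = d1" using Min_wtm_props(2)[OF assms(1)] d1_def by blast
  obtain b where b: "b \<in> Poly_Mapping.keys q" "wtm w b = d2" using Min_wtm_props(2)[OF assms(2)] d2_def by blast
  have pa: "wpart w d1 p = Poly_Mapping.single a (Poly_Mapping.lookup p a)"
  proof (rule poly_mapping_eqI)
    fix k show "Poly_Mapping.lookup (wpart w d1 p) k = Poly_Mapping.lookup (Poly_Mapping.single a (Poly_Mapping.lookup p a)) k"
    proof (cases "k \<in> Poly_Mapping.keys p \<and> wtm w k = d1")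
      case True then have "k = a" using w a by (auto dest: inj_onD)
      then show ?thesis using a by (simp add: lookup_wpart)
    next
      case False then show ?thesis using a by (auto simp: lookup_wpart lookup_single when_def in_keys_iff)
    qed
  qed
  have qb: "wpart w d2 q = Poly_Mapping.single b (Poly_Mapping.lookup q b)"
  proof (rule poly_mapping_eqI)
    fix k show "Poly_Mapping.lookup (wpart w d2 q) k = Poly_Mapping.lookup (Poly_Mapping.single b (Poly_Mapping.lookup q b)) k"
    proof (cases "k \<in> Poly_Mapping.keys q \<and> wtm w k = d2")
      case True then have "k = b" using w b by (auto dest: inj_onD)
      then show ?thesis using b by (simp add: lookup_wpart)
    next
      case False then show ?thesis using b by (auto simp: lookup_wpart lookup_single when_def in_keys_iff)
    qed
  qed
  have "wpart w (d1 + d2) (p * q) = wpart w d1 p * wpart w d2 q"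
    using Min_wtm_props(1)[OF assms(1)] Min_wtm_props(1)[OF assms(2)] d1_def d2_def by (intro wpart_mult) auto
  also have "\<dots> = Poly_Mapping.single (a + b) (Poly_Mapping.lookup p a * Poly_Mapping.lookup q b)"
    by (simp add: pa qb mult_single)
  also have "\<dots> \<noteq> 0" using a b by (metis in_keys_iff lookup_single_eq lookup_zero mult_eq_0_iff)
  finally show ?thesis by auto
qed

lemma mp_power_nonzero: "(p::'n::finite mpoly) \<noteq> 0 \<Longrightarrow> p ^ k \<noteq> 0"
  by (induction k) (auto simp: mp_mult_nonzero)

lemma mp_mult_cancel: "(g::'n::finite mpoly) \<noteq> 0 \<Longrightarrow> g * p = 0 \<Longrightarrow> p = 0"
  using mp_mult_nonzero by blast

section \<open>ord and faces\<close>

lemma ord_f_Min: assumes "f \<noteq> 0" shows "ord_f f w = Min (wtm w ` Poly_Mapping.keys f)"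
proof -
  let ?m = "Min (wtm w ` Poly_Mapping.keys f)"
  have low: "\<forall>u\<in>newton f. ?m \<le> inner u w"
  proof -
    have "convex {u. ?m \<le> inner u w}"
      using convex_halfspace_ge[where a=w and b="?m"] by (simp add: inner_commute)
    moreover have "vec_of ` Poly_Mapping.keys f \<subseteq> {u. ?m \<le> inner u w}"
      by (auto simp: wtm_def)
    ultimately have "newton f \<subseteq> {u. ?m \<le> inner u w}"
      unfolding newton_def by (intro hull_minimal)
    then show ?thesis by auto
  qed
  obtain a where a: "a \<in> Poly_Mapping.keys f" "wtm w a = ?m" using Min_wtm_props(2)[OF assms] by blast
  have "vec_of a \<in> newton f" unfolding newton_def using a by (intro hull_inc) auto
  then have "inner (vec_of a) w \<in> (\<lambda>u. inner u w) ` newton f" by auto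
  then show ?thesis unfolding ord_f_def
    by (intro cInf_eq_minimum) (use a low in \<open>auto simp: wtm_def\<close>)
qed

lemma vec_of_in_newton: "a \<in> Poly_Mapping.keys f \<Longrightarrow> vec_of a \<in> newton f"
  unfolding newton_def by (intro hull_inc) auto

lemma face_part_wpart: "face_part f (tau f w) = wpart w (ord_f f w) f"
proof -
  have "{a\<in>Poly_Mapping.keys f. vec_of a \<in> tau f w} = {a\<in>Poly_Mapping.keys f. wtm w a = ord_f f w}"
    by (auto simp: tau_def wtm_def vec_of_in_newton)
  then show ?thesis unfolding face_part_def wpart_def by simp
qed

lemma geq_ord: "f \<noteq> 0 \<Longrightarrow> geq w (ord_f f w) f"
  using Min_wtm_props(1) ord_f_Min by metis

lemma face_part_nonzero: "f \<noteq> 0 \<Longrightarrow> face_part f (tau f w) \<noteq> 0"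
  using wpart_Min_nonzero ord_f_Min face_part_wpart by metis

section \<open>initial forms of derivatives of 1/f^l\<close>

definition rel :: "real^'n \<Rightarrow> real \<Rightarrow> real \<Rightarrow> 'n::finite mpoly \<times> nat \<Rightarrow> 'n mpoly \<times> nat \<Rightarrow> bool" where
  "rel w od e x y \<longleftrightarrow> snd x = snd y \<and> geq w (real (snd x) * od - e) (fst x) \<and> wpart w (real (snd x) * od - e) (fst x) = fst y"

lemma geq_mult': "geq w d1 p \<Longrightarrow> geq w d2 q \<Longrightarrow> d = d1 + d2 \<Longrightarrow> geq w d (p * q)"
  using geq_mult by blast
lemma wpart_mult': "geq w d1 p \<Longrightarrow> geq w d2 q \<Longrightarrow> d = d1 + d2 \<Longrightarrow> wpart w d (p * q) = wpart w d1 p * wpart w d2 q"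
  using wpart_mult by blast

lemma rel_dstep: assumes f: "geq w od f" and g: "g = wpart w od f" and r: "rel w od e x y"
  shows "rel w od (e + w $ i) (dstep f i x) (dstep g i y)"
proof -
  obtain h m where x: "x = (h, m)" by (cases x)
  obtain h' where y: "y = (h', m)" using r x by (cases y) (auto simp: rel_def)
  have h: "geq w (real m * od - e) h" "wpart w (real m * od - e) h = h'" using r x y by (auto simp: rel_def)
  let ?d = "real (Suc m) * od - (e + w $ i)"
  have dh: "geq w (real m * od - e - w $ i) (pderiv_mp i h)" "wpart w (real m * od - e - w $ i) (pderiv_mp i h) = pderiv_mp i h'"
    using geq_pderiv_wpart[OF h(1), of i] h(2) by auto
  have df: "geq w (od - w $ i) (pderiv_mp i f)" "wpart w (od - w $ i) (pderiv_mp i f) = pderiv_mp i g"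
    using geq_pderiv_wpart[OF f, of i] g by auto
  have mh: "geq w (0 + (real m * od - e)) (of_nat m * h)" "wpart w (0 + (real m * od - e)) (of_nat m * h) = of_nat m * h'"
    using geq_mult[OF geq_of_nat h(1)] wpart_mult[OF geq_of_nat h(1)] h(2) by (auto simp: wpart_of_nat)
  have d1: "?d = (real m * od - e - w $ i) + od" by (simp add: algebra_simps)
  have d2: "?d = (0 + (real m * od - e)) + (od - w $ i)" by (simp add: algebra_simps)
  have A: "geq w ?d (pderiv_mp i h * f)" "wpart w ?d (pderiv_mp i h * f) = pderiv_mp i h' * g"
    using geq_mult'[OF dh(1) f d1] wpart_mult'[OF dh(1) f d1] dh(2) g by auto
  have B: "geq w ?d (of_nat m * h * pderiv_mp i f)" "wpart w ?d (of_nat m * h * pderiv_mp i f) = of_nat m * h' * pderiv_mp i g"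
    using geq_mult'[OF mh(1) df(1) d2] wpart_mult'[OF mh(1) df(1) d2] mh(2) df(2) by auto
  show ?thesis unfolding x y rel_def dstep_def
    using A B by (simp add: geq_diff wpart_diff)
qed

lemma rel_pow: assumes f: "geq w od f" and g: "g = wpart w od f"
  shows "rel w od e x y \<Longrightarrow> rel w od (e + real k * w $ i) ((dstep f i ^^ k) x) ((dstep g i ^^ k) y)"
proof (induction k)
  case 0 then show ?case by simp
next
  case (Suc k)
  have "rel w od (e + real k * w $ i + w $ i) (dstep f i ((dstep f i ^^ k) x)) (dstep g i ((dstep g i ^^ k) y))"
    by (rule rel_dstep[OF f g Suc.IH[OF Suc.prems]])
  then show ?case by (simp add: algebra_simps)
qed

lemma rel_foldr: assumes f: "geq w od f" and g: "g = wpart w od f"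
  shows "rel w od e x y \<Longrightarrow> rel w od (e + sum_list (map (\<lambda>i. real (Poly_Mapping.lookup b i) * w $ i) xs))
     (foldr (\<lambda>i. dstep f i ^^ Poly_Mapping.lookup b i) xs x) (foldr (\<lambda>i. dstep g i ^^ Poly_Mapping.lookup b i) xs y)"
proof (induction xs)
  case Nil then show ?case by simp
next
  case (Cons i xs)
  show ?case using rel_pow[OF f g Cons.IH[OF Cons.prems], of "Poly_Mapping.lookup b i" i]
    by (simp add: algebra_simps)
qed

lemma var_list_props: "set (var_list :: 'n::finite list) = UNIV \<and> distinct (var_list :: 'n list)"
  unfolding var_list_def by (rule someI_ex) (rule finite_distinct_list, simp)

lemma rel_dpow: fixes f :: "'n::finite mpoly" assumes f: "geq w od f" and g: "g = wpart w od f"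
  shows "rel w od (real l * od + wtm w b) (dpow_inv f l b) (dpow_inv g l b)"
proof -
  have base: "rel w od (real l * od) (1, l) (1, l)"
    by (simp add: rel_def wpart_one geq_def)
  have "sum_list (map (\<lambda>i. real (Poly_Mapping.lookup b i) * w $ i) (var_list :: 'n list)) = wtm w b"
    using var_list_props[where 'n='n] by (simp add: wtm_sum sum.distinct_set_conv_list[symmetric])
  then show ?thesis using rel_foldr[OF f g base, of b var_list] unfolding dpow_inv_def by simp
qed

lemma lookup_init_form: "Poly_Mapping.lookup (init_form w P) k =
   (if k \<in> Poly_Mapping.keys P \<and> wt w k = Max (wt w ` Poly_Mapping.keys P) then Poly_Mapping.lookup P k else 0)"
  by (simp add: init_form_def Let_def lookup_sum lookup_single when_def in_keys_iff split: if_splits)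

lemma keys_init_form: "Poly_Mapping.keys (init_form w P) = {k \<in> Poly_Mapping.keys P. wt w k = Max (wt w ` Poly_Mapping.keys P)}"
  by (auto simp: in_keys_iff lookup_init_form split: if_splits)

lemma init_form_nonzero: assumes "P \<noteq> 0" shows "init_form w P \<noteq> 0"
proof -
  have "Max (wt w ` Poly_Mapping.keys P) \<in> wt w ` Poly_Mapping.keys P"
    by (rule Max_in) (use assms in auto)
  then obtain k where "k \<in> Poly_Mapping.keys P" "wt w k = Max (wt w ` Poly_Mapping.keys P)" by auto
  then have "k \<in> Poly_Mapping.keys (init_form w P)" by (simp add: keys_init_form)
  then show ?thesis by auto
qed

lemma init_form_idem: assumes "P \<noteq> 0" shows "init_form w (init_form w P) = init_form w P"
proof -
  let ?M = "Max (wt w ` Poly_Mapping.keys P)"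
  have ne: "Poly_Mapping.keys (init_form w P) \<noteq> {}" using init_form_nonzero[OF assms] by simp
  have "wt w ` Poly_Mapping.keys (init_form w P) = {?M}"
    using ne by (auto simp: keys_init_form)
  then have M: "Max (wt w ` Poly_Mapping.keys (init_form w P)) = ?M" by simp
  show ?thesis
  proof (rule poly_mapping_eqI)
    fix k
    have "k \<in> Poly_Mapping.keys (init_form w P) \<Longrightarrow> wt w k = ?M" by (simp add: keys_init_form)
    then show "Poly_Mapping.lookup (init_form w (init_form w P)) k = Poly_Mapping.lookup (init_form w P) k"
      unfolding lookup_init_form[of w "init_form w P"] M by (auto simp: in_keys_iff)
  qed
qed

lemma geq_xmono: "geq w (wtm w a) (xmono a)" and wpart_xmono: "wpart w (wtm w a) (xmono a) = xmono a"
  by (simp_all add: xmono_def geq_single wpart_single)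

lemma ann_init:
  fixes f :: "'n::finite mpoly"
  assumes f: "f \<noteq> 0" and P: "P \<in> Ann_inv_pow f l" and P0: "P \<noteq> 0"
  shows "init_form w P \<in> Ann_inv_pow (face_part f (tau f w)) l"
proof -
  define od where "od = ord_f f w"
  define g where "g = face_part f (tau f w)"
  have fg: "geq w od f" "g = wpart w od f" using geq_ord[OF f] face_part_wpart by (auto simp: od_def g_def)
  have g0: "g \<noteq> 0" using face_part_nonzero[OF f] g_def by simp
  define K where "K = Poly_Mapping.keys P"
  define M where "M = Max (wt w ` K)"
  define T where "T = {k\<in>K. wt w k = M}"
  have finK: "finite K" by (simp add: K_def)
  have TK: "T \<subseteq> K" by (auto simp: T_def)
  have Mge: "\<And>k. k \<in> K \<Longrightarrow> wt w k \<le> M" unfolding M_def using finK by auto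
  have lIP: "\<And>k. Poly_Mapping.lookup (init_form w P) k = (if k \<in> T then Poly_Mapping.lookup P k else 0)"
    by (simp add: lookup_init_form T_def K_def M_def)
  have kIP: "Poly_Mapping.keys (init_form w P) = T"
    by (simp add: keys_init_form T_def K_def M_def)
  define hb where "hb b = fst (dpow_inv f l b)" for b
  define hb' where "hb' b = fst (dpow_inv g l b)" for b
  define mb where "mb b = snd (dpow_inv f l b)" for b
  have r: "\<And>b. rel w od (real l * od + wtm w b) (dpow_inv f l b) (dpow_inv g l b)"
    by (rule rel_dpow[OF fg])
  have mb': "\<And>b. snd (dpow_inv g l b) = mb b" using r by (simp add: rel_def mb_def)
  have hgeq: "\<And>b. geq w (real (mb b) * od - (real l * od + wtm w b)) (hb b)"
    using r unfolding rel_def mb_def hb_def by blast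
  have hpart: "\<And>b. wpart w (real (mb b) * od - (real l * od + wtm w b)) (hb b) = hb' b"
    using r unfolding rel_def mb_def hb_def hb'_def by blast
  define N where "N = (\<Sum>(a,b)\<in>K. mb b)"
  define N' where "N' = (\<Sum>(a,b)\<in>T. mb b)"
  have hyp: "(\<Sum>(a,b)\<in>K. cmul (Poly_Mapping.lookup P (a,b)) (xmono a * hb b * f ^ (N - mb b))) = 0"
    using P by (simp add: Ann_inv_pow_def annihilates_def Let_def K_def N_def hb_def mb_def)
  define D where "D = real N * od - real l * od - M"
  define F where "F = (\<lambda>(a,b). cmul (Poly_Mapping.lookup P (a,b)) (xmono a * hb b * f ^ (N - mb b)))"
  define G where "G = (\<lambda>(a,b). cmul (Poly_Mapping.lookup P (a,b)) (xmono a * hb' b * g ^ (N - mb b)))"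
  define G' where "G' = (\<lambda>(a,b). cmul (Poly_Mapping.lookup P (a,b)) (xmono a * hb' b * g ^ (N' - mb b)))"
  have mbN: "\<And>a b. (a,b) \<in> K \<Longrightarrow> mb b \<le> N"
    unfolding N_def using finK by (metis (mono_tags, lifting) case_prod_conv member_le_sum zero_le)
  have mbN': "\<And>a b. (a,b) \<in> T \<Longrightarrow> mb b \<le> N'"
    unfolding N'_def using finK TK finite_subset by (metis (mono_tags, lifting) case_prod_conv member_le_sum zero_le)
  have N'N: "N' \<le> N" unfolding N_def N'_def by (rule sum_mono2[OF finK TK]) auto
  have trm: "wpart w D (F x) = (if x \<in> T then G x else 0)" if x: "x \<in> K" for x
  proof -
    obtain a b where ab: "x = (a,b)" by (cases x)
    let ?E = "wtm w a + (real (mb b) * od - (real l * od + wtm w b)) + real (N - mb b) * od"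
    have le: "mb b \<le> N" using mbN x ab by simp
    have E: "?E = D + (M - wt w (a,b))"
      using le by (simp add: D_def wt_conv of_nat_diff algebra_simps)
    have g1: "geq w (wtm w a + (real (mb b) * od - (real l * od + wtm w b))) (xmono a * hb b)"
      by (rule geq_mult[OF geq_xmono hgeq])
    have p1: "wpart w (wtm w a + (real (mb b) * od - (real l * od + wtm w b))) (xmono a * hb b) = xmono a * hb' b"
      using wpart_mult[OF geq_xmono hgeq] by (simp add: wpart_xmono hpart)
    have gp: "geq w (real (N - mb b) * od) (f ^ (N - mb b))" by (rule geq_power[OF fg(1)])
    have pp: "wpart w (real (N - mb b) * od) (f ^ (N - mb b)) = g ^ (N - mb b)"
      using wpart_power[OF fg(1)] fg(2) by simp
    have gE: "geq w ?E (F x)" unfolding F_def ab using geq_mult[OF g1 gp] by (simp add: geq_cmul)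
    have pE: "wpart w ?E (F x) = G x" unfolding F_def G_def ab
      using wpart_mult[OF g1 gp] p1 pp by (simp add: wpart_cmul)
    show ?thesis
    proof (cases "wt w (a,b) = M")
      case True
      then have "?E = D" using E by simp
      then show ?thesis using pE True x ab by (simp add: T_def)
    next
      case False
      then have "wt w (a,b) < M" using Mge x ab by force
      then have "D < ?E" using E by simp
      then have "wpart w D (F x) = 0" by (rule wpart_low[OF gE])
      then show ?thesis using False ab by (simp add: T_def)
    qed
  qed
  have "0 = wpart w D (sum F K)" using hyp by (simp add: F_def)
  also have "\<dots> = (\<Sum>x\<in>K. if x \<in> T then G x else 0)" unfolding wpart_sum by (rule sum.cong) (auto simp: trm)
  also have "\<dots> = sum G T" using sum.inter_restrict[OF finK, of G T, symmetric] Int_absorb1[OF TK] by simp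
  also have "\<dots> = (\<Sum>x\<in>T. g ^ (N - N') * G' x)"
  proof (rule sum.cong[OF refl])
    fix x assume x: "x \<in> T"
    obtain a b where ab: "x = (a,b)" by (cases x)
    have "N - mb b = (N - N') + (N' - mb b)" using mbN'[of a b] x ab N'N by simp
    then have "g ^ (N - mb b) = g ^ (N - N') * g ^ (N' - mb b)" by (simp add: power_add)
    then show "G x = g ^ (N - N') * G' x" unfolding G_def G'_def ab by (simp add: cmul_conv ac_simps)
  qed
  also have "\<dots> = g ^ (N - N') * sum G' T" by (simp add: sum_distrib_left)
  finally have "sum G' T = 0" using mp_power_nonzero[OF g0] mp_mult_cancel by metis
  moreover have "(\<Sum>(a,b)\<in>Poly_Mapping.keys (init_form w P). snd (dpow_inv g l b)) = N'"
    by (simp add: kIP N'_def mb')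
  ultimately show ?thesis
    unfolding Ann_inv_pow_def annihilates_def Let_def g_def[symmetric]
    by (simp add: kIP G'_def hb'_def mb' lIP split_def)
qed

definition cmulw :: "complex \<Rightarrow> 'n::finite weyl \<Rightarrow> 'n weyl" where
  "cmulw c P = Poly_Mapping.map (\<lambda>z. c * z) P"

lemma lookup_cmulw [simp]: "Poly_Mapping.lookup (cmulw c p) k = c * Poly_Mapping.lookup p k"
  by (simp add: cmulw_def Poly_Mapping.map.rep_eq when_def)

lemma lookup_map_mult [simp]: "Poly_Mapping.lookup (Poly_Mapping.map (\<lambda>z. c * z) (p :: 'a \<Rightarrow>\<^sub>0 'b::mult_zero)) k = c * Poly_Mapping.lookup p k"
  by (simp add: Poly_Mapping.map.rep_eq when_def)

lemma cmulw_add: "cmulw (a + b) X = cmulw a X + cmulw b X"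
  by (rule poly_mapping_eqI) (simp add: lookup_add distrib_right)
lemma cmulw_add2: "cmulw a (X + Y) = cmulw a X + cmulw a Y"
  by (rule poly_mapping_eqI) (simp add: lookup_add distrib_left)
lemma cmulw_zero [simp]: "cmulw 0 X = 0" "cmulw a 0 = 0"
  by (rule poly_mapping_eqI, simp)+
lemma cmulw_sum: "cmulw a (sum g S) = (\<Sum>x\<in>S. cmulw a (g x))"
  by (rule poly_mapping_eqI) (simp add: lookup_sum sum_distrib_left)
lemma cmulw_cmulw: "cmulw a (cmulw b X) = cmulw (a * b) X"
  by (rule poly_mapping_eqI) simp
lemma cmulw_one [simp]: "cmulw 1 X = X"
  by (rule poly_mapping_eqI) simp

lemma weyl_mono_mult_00: "weyl_mono_mult 0 0 c d = Poly_Mapping.single (c, d) 1"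
proof -
  have "{k. \<forall>i. Poly_Mapping.lookup k i \<le> Poly_Mapping.lookup (0::'a mono) i \<and> Poly_Mapping.lookup k i \<le> Poly_Mapping.lookup c i} = {0::'a mono}"
    by (auto intro!: poly_mapping_eqI)
  then show ?thesis by (simp add: weyl_mono_mult_def)
qed

lemma weyl_mult_gen: assumes "finite S" "Poly_Mapping.keys Q \<subseteq> S"
  shows "weyl_mult P Q = (\<Sum>(a,b)\<in>Poly_Mapping.keys P. \<Sum>(c,d)\<in>S.
      Poly_Mapping.map (\<lambda>z. Poly_Mapping.lookup P (a,b) * Poly_Mapping.lookup Q (c,d) * z) (weyl_mono_mult a b c d))"
  unfolding weyl_mult_def
proof (intro sum.cong refl)
  fix x assume "x \<in> Poly_Mapping.keys P"
  show "(case x of (a, b) \<Rightarrow> \<Sum>(c, d)\<in>Poly_Mapping.keys Q. Poly_Mapping.map (\<lambda>z. Poly_Mapping.lookup P (a, b) * Poly_Mapping.lookup Q (c, d) * z) (weyl_mono_mult a b c d)) =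
        (case x of (a, b) \<Rightarrow> \<Sum>(c, d)\<in>S. Poly_Mapping.map (\<lambda>z. Poly_Mapping.lookup P (a, b) * Poly_Mapping.lookup Q (c, d) * z) (weyl_mono_mult a b c d))"
  proof (cases x)
    case (Pair a b)
    have z: "Poly_Mapping.map (\<lambda>z. Poly_Mapping.lookup P (a, b) * Poly_Mapping.lookup Q y * z) (weyl_mono_mult a b (fst y) (snd y)) = 0"
      if "y \<in> S - Poly_Mapping.keys Q" for y
      using that by (intro poly_mapping_eqI) (simp add: in_keys_iff Poly_Mapping.map.rep_eq when_def)
    show ?thesis unfolding Pair split_def
      by (rule sum.mono_neutral_left[OF assms(1) assms(2)]) (use z in \<open>auto simp: split_def\<close>)
  qed
qed

lemma weyl_mult_zero_right [simp]: "weyl_mult P 0 = 0"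
  by (simp add: weyl_mult_def)

lemma weyl_mult_zero_left [simp]: "weyl_mult 0 Q = 0"
  by (simp add: weyl_mult_def)

lemma lookup_weyl_mult: assumes "finite S" "Poly_Mapping.keys Q \<subseteq> S"
  shows "Poly_Mapping.lookup (weyl_mult P Q) k = (\<Sum>(a,b)\<in>Poly_Mapping.keys P. \<Sum>(c,d)\<in>S.
      Poly_Mapping.lookup P (a,b) * Poly_Mapping.lookup Q (c,d) * Poly_Mapping.lookup (weyl_mono_mult a b c d) k)"
  by (simp add: weyl_mult_gen[OF assms] lookup_sum split_def)

lemma weyl_mult_add_right: "weyl_mult P (A + B) = weyl_mult P A + weyl_mult P B"
proof (rule poly_mapping_eqI)
  fix k
  let ?S = "Poly_Mapping.keys A \<union> Poly_Mapping.keys B"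
  have fin: "finite ?S" by simp
  have s1: "Poly_Mapping.keys (A + B) \<subseteq> ?S" using keys_add[of A B] by auto
  show "Poly_Mapping.lookup (weyl_mult P (A + B)) k = Poly_Mapping.lookup (weyl_mult P A + weyl_mult P B) k"
    by (simp add: lookup_add lookup_weyl_mult[OF fin s1] lookup_weyl_mult[OF fin, of A] lookup_weyl_mult[OF fin, of B]
        distrib_left distrib_right sum.distrib split_def)
qed

lemma weyl_mult_sum_right: "weyl_mult P (sum g S) = (\<Sum>x\<in>S. weyl_mult P (g x))"
  by (induction S rule: infinite_finite_induct) (auto simp: weyl_mult_add_right)

lemma weyl_mult_cmulw_right: "weyl_mult P (cmulw c A) = cmulw c (weyl_mult P A)"
proof (rule poly_mapping_eqI)
  fix k
  have fin: "finite (Poly_Mapping.keys A)" by simp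
  have s1: "Poly_Mapping.keys (cmulw c A) \<subseteq> Poly_Mapping.keys A" by (auto simp: in_keys_iff)
  show "Poly_Mapping.lookup (weyl_mult P (cmulw c A)) k = Poly_Mapping.lookup (cmulw c (weyl_mult P A)) k"
    by (simp add: lookup_weyl_mult[OF fin s1] lookup_weyl_mult[OF fin, of A] sum_distrib_left split_def ac_simps)
qed

lemma weyl_mult_const_left: "weyl_mult (Poly_Mapping.single (0,0) c) X = cmulw c X"
proof (cases "c = 0")
  case True then show ?thesis by simp
next
  case False
  then have "weyl_mult (Poly_Mapping.single (0,0) c) X = (\<Sum>(a,b)\<in>Poly_Mapping.keys X. Poly_Mapping.single (a,b) (c * Poly_Mapping.lookup X (a,b)))"
    by (simp add: weyl_mult_def weyl_mono_mult_00 split_def)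
  also have "\<dots> = cmulw c X"
    by (rule poly_mapping_eqI) (simp add: lookup_sum lookup_single when_def split_def in_keys_iff sum.delta' split: if_splits)
  finally show ?thesis .
qed

lemma lig_cmulw: "A \<in> left_ideal_gen S \<Longrightarrow> cmulw c A \<in> left_ideal_gen S"
  using left_ideal_gen.lmult[of A S "Poly_Mapping.single (0,0) c"] by (simp add: weyl_mult_const_left)

lemma lig_sum: "(\<And>x. x \<in> T \<Longrightarrow> g x \<in> left_ideal_gen S) \<Longrightarrow> sum g T \<in> left_ideal_gen S"
  by (induction T rule: infinite_finite_induct) (auto intro: left_ideal_gen.intros)

lemma lig_mono: assumes "S \<subseteq> S'" shows "A \<in> left_ideal_gen S \<Longrightarrow> A \<in> left_ideal_gen S'"
  by (induction rule: left_ideal_gen.induct) (use assms in \<open>auto intro: left_ideal_gen.intros\<close>)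

lemma poly_at_s_gen: "degree p \<le> n \<Longrightarrow> poly_at_s w p = (\<Sum>k\<le>n. cmulw (coeff p k) (weyl_pow (euler_s w) k))"
  unfolding poly_at_s_def weyl_mult_const_left
  by (rule sum.mono_neutral_left) (auto simp: coeff_eq_0)

lemma poly_at_s_add: "poly_at_s w (p + q) = poly_at_s w p + poly_at_s w q"
proof -
  let ?n = "max (degree p) (degree q)"
  have "degree (p + q) \<le> ?n" by (rule degree_add_le) auto
  then show ?thesis
    by (simp add: poly_at_s_gen[of _ ?n] cmulw_add sum.distrib)
qed

lemma poly_at_s_smult: "poly_at_s w (smult c p) = cmulw c (poly_at_s w p)"
  by (simp add: poly_at_s_gen[of _ "degree p"] cmulw_sum cmulw_cmulw)

lemma poly_at_s_X: "poly_at_s w (pCons 0 p) = weyl_mult (euler_s w) (poly_at_s w p)"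
proof -
  have "degree (pCons 0 p) \<le> Suc (degree p)" by (simp add: degree_pCons_le)
  then have "poly_at_s w (pCons 0 p) = (\<Sum>k\<le>Suc (degree p). cmulw (coeff (pCons 0 p) k) (weyl_pow (euler_s w) k))"
    by (rule poly_at_s_gen)
  also have "\<dots> = (\<Sum>k\<le>degree p. cmulw (coeff p k) (weyl_pow (euler_s w) (Suc k)))"
    unfolding sum.atMost_Suc_shift by simp
  also have "\<dots> = weyl_mult (euler_s w) (poly_at_s w p)"
    by (simp add: poly_at_s_gen[of p "degree p"] weyl_mult_sum_right weyl_mult_cmulw_right)
  finally show ?thesis .
qed

lemma poly_at_s_zero [simp]: "poly_at_s w 0 = 0"
  by (simp add: poly_at_s_def)

definition Jset :: "'n::finite weyl set \<Rightarrow> real^'n \<Rightarrow> complex poly set" where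
  "Jset I w = {p. poly_at_s w p \<in> init_ideal w I}"

lemma Jset_zero: "0 \<in> Jset I w"
  by (simp add: Jset_def init_ideal_def left_ideal_gen.zero)

lemma Jset_add: "p \<in> Jset I w \<Longrightarrow> q \<in> Jset I w \<Longrightarrow> p + q \<in> Jset I w"
  by (simp add: Jset_def init_ideal_def poly_at_s_add left_ideal_gen.add)

lemma Jset_smult: "p \<in> Jset I w \<Longrightarrow> smult c p \<in> Jset I w"
  by (simp add: Jset_def init_ideal_def poly_at_s_smult lig_cmulw)

lemma Jset_X: "p \<in> Jset I w \<Longrightarrow> pCons 0 p \<in> Jset I w"
  by (simp add: Jset_def init_ideal_def poly_at_s_X left_ideal_gen.lmult)

lemma Jset_mult: "p \<in> Jset I w \<Longrightarrow> q * p \<in> Jset I w"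
proof (induction q)
  case 0 then show ?case by (simp add: Jset_zero)
next
  case (pCons a q)
  then show ?case by (simp add: Jset_add Jset_smult Jset_X)
qed

lemma monic_assoc_eq: fixes b1 b2 :: "complex poly"
  assumes "b1 dvd b2" "b2 dvd b1" "lead_coeff b1 = 1" "lead_coeff b2 = 1" shows "b1 = b2"
proof -
  obtain r where r: "b2 = b1 * r" using assms(1) by auto
  have b1: "b1 \<noteq> 0" "b2 \<noteq> 0" using assms(3,4) by auto
  have "degree b1 \<le> degree b2" "degree b2 \<le> degree b1"
    using assms(1,2) b1 by (auto intro: dvd_imp_degree_le)
  then have "degree r = 0" using r b1 by (simp add: degree_mult_eq)
  moreover have "lead_coeff r = 1" using r assms(3,4) by (simp add: lead_coeff_mult)
  ultimately have "r = 1" by (metis degree_0_id one_pCons)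
  then show ?thesis using r by simp
qed

lemma ideal_generator:
  fixes J :: "complex poly set"
  assumes z: "0 \<in> J" and a: "\<And>p q. p \<in> J \<Longrightarrow> q \<in> J \<Longrightarrow> p + q \<in> J" and m: "\<And>p q. p \<in> J \<Longrightarrow> q * p \<in> J"
  shows "\<exists>!b. J = {p. b dvd p} \<and> (b = 0 \<or> lead_coeff b = 1)"
proof -
  have ex: "\<exists>b. J = {p. b dvd p} \<and> (b = 0 \<or> lead_coeff b = 1)"
  proof (cases "J \<subseteq> {0}")
    case True
    then have "J = {p. 0 dvd p}" using z by auto
    then show ?thesis by blast
  next
    case False
    then obtain p1 where p1: "p1 \<in> J" "p1 \<noteq> 0" by auto
    define d where "d = (LEAST n. \<exists>p\<in>J. p \<noteq> 0 \<and> degree p = n)"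
    have "\<exists>p\<in>J. p \<noteq> 0 \<and> degree p = d"
      unfolding d_def by (rule LeastI[of _ "degree p1"]) (use p1 in auto)
    then obtain p0 where p0: "p0 \<in> J" "p0 \<noteq> 0" "degree p0 = d" by auto
    have minimal: "\<And>p. p \<in> J \<Longrightarrow> p \<noteq> 0 \<Longrightarrow> d \<le> degree p"
      unfolding d_def by (rule Least_le) auto
    define b where "b = smult (inverse (lead_coeff p0)) p0"
    have bJ: "b \<in> J" unfolding b_def using m[OF p0(1), of "[:inverse (lead_coeff p0):]"] by simp
    have b0: "b \<noteq> 0" "lead_coeff b = 1" "degree b = d" using p0 by (auto simp: b_def)
    have "J = {p. b dvd p}"
    proof (intro set_eqI iffI)
      fix p assume pJ: "p \<in> J"
      have "p + (-(p div b)) * b \<in> J" by (rule a[OF pJ m[OF bJ]])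
      then have modJ: "p mod b \<in> J" by (metis minus_div_mult_eq_mod diff_conv_add_uminus minus_mult_left)
      have "p mod b = 0"
      proof (rule ccontr)
        assume nz: "p mod b \<noteq> 0"
        then have "degree (p mod b) < degree b" using degree_mod_less'[OF b0(1)] by simp
        moreover have "d \<le> degree (p mod b)" using minimal[OF modJ nz] .
        ultimately show False using b0 by simp
      qed
      then show "p \<in> {p. b dvd p}" by (simp add: mod_eq_0_iff_dvd)
    next
      fix p assume "p \<in> {p. b dvd p}"
      then obtain r where "p = b * r" by auto
      then show "p \<in> J" using m[OF bJ, of r] by (simp add: mult.commute)
    qed
    then show ?thesis using b0 by blast
  qed
  show ?thesis
  proof (rule ex_ex1I[OF ex])
    fix b1 b2 assume h1: "J = {p. b1 dvd p} \<and> (b1 = 0 \<or> lead_coeff b1 = 1)" and h2: "J = {p. b2 dvd p} \<and> (b2 = 0 \<or> lead_coeff b2 = 1)"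
    have d12: "b1 dvd b2" "b2 dvd b1" using h1 h2 by (metis mem_Collect_eq dvd_refl)+
    show "b1 = b2"
    proof (cases "b1 = 0 \<or> b2 = 0")
      case True then show ?thesis using d12 by auto
    next
      case False then show ?thesis using h1 h2 d12 monic_assoc_eq by auto
    qed
  qed
qed

lemma bfun_props: "Jset I w = {p. bfun I w dvd p} \<and> (bfun I w = 0 \<or> lead_coeff (bfun I w) = 1)"
proof -
  have "\<exists>!b. Jset I w = {p. b dvd p} \<and> (b = 0 \<or> lead_coeff b = 1)"
    by (rule ideal_generator) (auto intro: Jset_zero Jset_add Jset_mult)
  then show ?thesis unfolding bfun_def Jset_def[symmetric] by (rule theI')
qed

theorem part2:
  fixes f :: "'n::finite mpoly"
  assumes f: "f \<noteq> 0"
  shows "bfun (Ann_inv_pow (face_part f (tau f w)) l) w dvd bfun (Ann_inv_pow f l) w"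
proof -
  let ?g = "face_part f (tau f w)"
  have gen: "{init_form w P |P. P \<in> Ann_inv_pow f l \<and> P \<noteq> 0} \<subseteq> {init_form w P |P. P \<in> Ann_inv_pow ?g l \<and> P \<noteq> 0}"
  proof -
    show "{init_form w P |P. P \<in> Ann_inv_pow f l \<and> P \<noteq> 0} \<subseteq> {init_form w P |P. P \<in> Ann_inv_pow ?g l \<and> P \<noteq> 0}"
    proof
      fix x assume "x \<in> {init_form w P |P. P \<in> Ann_inv_pow f l \<and> P \<noteq> 0}"
      then obtain P where P: "x = init_form w P" "P \<in> Ann_inv_pow f l" "P \<noteq> 0" by auto
      then have "x = init_form w (init_form w P)" "init_form w P \<in> Ann_inv_pow ?g l" "init_form w P \<noteq> 0"
        using init_form_idem[OF P(3), of w] ann_init[OF f P(2) P(3)] init_form_nonzero[OF P(3)] P(1) by auto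
      then show "x \<in> {init_form w P |P. P \<in> Ann_inv_pow ?g l \<and> P \<noteq> 0}" by blast
    qed
  qed
  have sub: "init_ideal w (Ann_inv_pow f l) \<subseteq> init_ideal w (Ann_inv_pow ?g l)"
    unfolding init_ideal_def by (rule subsetI) (rule lig_mono[OF gen])
  have e1: "Jset (Ann_inv_pow f l) w = {p. bfun (Ann_inv_pow f l) w dvd p}"
    using bfun_props[of "Ann_inv_pow f l" w] by (rule conjunct1)
  have e2: "Jset (Ann_inv_pow ?g l) w = {p. bfun (Ann_inv_pow ?g l) w dvd p}"
    using bfun_props[of "Ann_inv_pow ?g l" w] by (rule conjunct1)
  have "bfun (Ann_inv_pow f l) w \<in> Jset (Ann_inv_pow f l) w" unfolding e1 by simp
  then have "bfun (Ann_inv_pow f l) w \<in> Jset (Ann_inv_pow ?g l) w" using sub unfolding Jset_def by blast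
  then show ?thesis unfolding e2 by simp
qed

section \<open>combinatorics of multi-indices\<close>

definition phi :: "nat \<Rightarrow> nat \<Rightarrow> nat \<Rightarrow> nat" where
  "phi b c k = fact k * (b choose k) * (c choose k)"

lemma phi_0 [simp]: "phi b c 0 = 1" by (simp add: phi_def)

lemma phi_pascal: "phi (Suc b) c (Suc k) = phi b c (Suc k) + (c - k) * phi b c k"
proof -
  have e: "Suc k * (c choose Suc k) = (c - k) * (c choose k)"
    using binomial_absorption[of k c] binomial_absorb_comp[of c k] by simp
  have "phi (Suc b) c (Suc k) = fact (Suc k) * (b choose k) * (c choose Suc k) + phi b c (Suc k)"
    by (simp add: phi_def algebra_simps)
  also have "fact (Suc k) * (b choose k) * (c choose Suc k) = fact k * (b choose k) * (Suc k * (c choose Suc k))"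
    by (simp add: algebra_simps)
  also have "\<dots> = (c - k) * phi b c k" by (simp only: e) (simp add: phi_def algebra_simps)
  finally show ?thesis by simp
qed

lemma phi_nonzero: "phi b c k \<noteq> 0 \<Longrightarrow> k \<le> b \<and> k \<le> c"
  by (auto simp: phi_def)

definition coef :: "'n::finite mono \<Rightarrow> 'n mono \<Rightarrow> 'n mono \<Rightarrow> nat" where
  "coef b c k = (\<Prod>i\<in>UNIV. phi (Poly_Mapping.lookup b i) (Poly_Mapping.lookup c i) (Poly_Mapping.lookup k i))"

definition Kc :: "'n::finite mono \<Rightarrow> 'n mono set" where
  "Kc c = {k. \<forall>i. Poly_Mapping.lookup k i \<le> Poly_Mapping.lookup c i}"

lemma finite_Kc: "finite (Kc c)"
proof -
  have "Poly_Mapping.lookup ` Kc c \<subseteq> PiE UNIV (\<lambda>i. {0..Poly_Mapping.lookup c i})"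
    by (auto simp: Kc_def PiE_def extensional_def)
  then have "finite (Poly_Mapping.lookup ` Kc c)"
    by (rule finite_subset) (intro finite_PiE, auto)
  moreover have "inj_on Poly_Mapping.lookup (Kc c)"
    by (auto intro: inj_onI poly_mapping_eqI)
  ultimately show ?thesis using finite_imageD by blast
qed

lemma coef_nonzero: assumes "coef b c k \<noteq> 0" shows "(\<forall>i. Poly_Mapping.lookup k i \<le> Poly_Mapping.lookup b i \<and> Poly_Mapping.lookup k i \<le> Poly_Mapping.lookup c i)"
proof -
  have "phi (Poly_Mapping.lookup b i) (Poly_Mapping.lookup c i) (Poly_Mapping.lookup k i) \<noteq> 0" for i
    using assms unfolding coef_def by (metis UNIV_I finite_class.finite_UNIV prod_zero_iff)
  then show ?thesis using phi_nonzero by blast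
qed

lemma lookup_add_unitv: "Poly_Mapping.lookup (b + unitv j) i = Poly_Mapping.lookup b i + (if j = i then 1 else 0)"
  by (simp add: lookup_add lookup_unitv)

lemma coef_step: "coef (b + unitv j) c k = coef b c k +
   (if Poly_Mapping.lookup k j \<ge> 1 then (Poly_Mapping.lookup c j - (Poly_Mapping.lookup k j - 1)) * coef b c (k - unitv j) else 0)"
proof -
  let ?r = "\<lambda>k. (\<Prod>i\<in>UNIV - {j}. phi (Poly_Mapping.lookup b i) (Poly_Mapping.lookup c i) (Poly_Mapping.lookup k i))"
  have split: "\<And>b k. coef b c k = phi (Poly_Mapping.lookup b j) (Poly_Mapping.lookup c j) (Poly_Mapping.lookup k j) *
      (\<Prod>i\<in>UNIV - {j}. phi (Poly_Mapping.lookup b i) (Poly_Mapping.lookup c i) (Poly_Mapping.lookup k i))"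
    unfolding coef_def by (rule prod.remove) auto
  have r1: "(\<Prod>i\<in>UNIV - {j}. phi (Poly_Mapping.lookup (b + unitv j) i) (Poly_Mapping.lookup c i) (Poly_Mapping.lookup k i)) = ?r k"
    by (rule prod.cong) (auto simp: lookup_add_unitv)
  have r2: "(\<Prod>i\<in>UNIV - {j}. phi (Poly_Mapping.lookup b i) (Poly_Mapping.lookup c i) (Poly_Mapping.lookup (k - unitv j) i)) = ?r k"
    by (rule prod.cong) (auto simp: lookup_minus lookup_unitv)
  show ?thesis
  proof (cases "Poly_Mapping.lookup k j")
    case 0
    then show ?thesis by (simp add: split[of "b + unitv j"] split[of b] r1 lookup_add_unitv)
  next
    case (Suc k')
    have kj: "Poly_Mapping.lookup (k - unitv j) j = k'" using Suc by (simp add: lookup_minus lookup_unitv)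
    show ?thesis
      by (simp add: split[of "b + unitv j"] split[of b k] split[of b "k - unitv j"] r1 r2 lookup_add_unitv Suc kj phi_pascal algebra_simps)
  qed
qed

lemma mono_induct [case_names zero step]:
  assumes "P 0" "\<And>b j. P b \<Longrightarrow> P (b + unitv j)"
  shows "P (b :: 'n::finite mono)"
proof (induction "tdeg b" arbitrary: b)
  case 0
  then have "b = 0" by (auto simp: tdeg_def intro!: poly_mapping_eqI)
  then show ?case using assms(1) by simp
next
  case (Suc n)
  then have "b \<noteq> 0" by (auto simp: tdeg_def)
  then obtain j where j: "Poly_Mapping.lookup b j \<noteq> 0" by (metis lookup_zero poly_mapping_eqI)
  define b' where "b' = b - unitv j"
  have bb: "b = b' + unitv j"
    unfolding b'_def by (rule poly_mapping_eqI) (use j in \<open>auto simp: lookup_add lookup_minus lookup_unitv\<close>)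
  have "tdeg b = tdeg b' + 1"
  proof -
    have "tdeg b = (\<Sum>i\<in>UNIV. Poly_Mapping.lookup b' i + (if j = i then 1 else 0))"
      unfolding tdeg_def bb by (simp add: lookup_add_unitv)
    also have "\<dots> = tdeg b' + 1" by (simp add: tdeg_def sum.distrib)
    finally show ?thesis .
  qed
  then have "P b'" using Suc by simp
  then show ?case using assms(2) bb by simp
qed

section \<open>abstract Weyl modules\<close>

locale wmod =
  fixes C :: "complex \<Rightarrow> 'r::comm_ring_1" and xv :: "'n::finite \<Rightarrow> 'r" and Dv :: "'n \<Rightarrow> 'r \<Rightarrow> 'r"
  assumes C_add: "C (a + b) = C a + C b" and C_mult: "C (a * b) = C a * C b" and C_one: "C 1 = 1"
    and D_add: "Dv i (u + v) = Dv i u + Dv i v"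
    and D_mult: "Dv i (u * v) = Dv i u * v + u * Dv i v"
    and D_C: "Dv i (C c) = 0"
    and D_x: "Dv i (xv j) = (if i = j then 1 else 0)"
    and D_comm: "Dv i (Dv j u) = Dv j (Dv i u)"
begin

lemma C_zero [simp]: "C 0 = 0"
  using C_add[of 0 0] by simp

lemma C_of_nat [simp]: "C (of_nat n) = of_nat n"
  by (induction n) (simp_all add: C_add C_one)

lemma D_zero [simp]: "Dv i 0 = 0"
  using D_add[of i 0 0] by simp

lemma D_uminus: "Dv i (- u) = - Dv i u"
  using D_add[of i u "-u"] by (simp add: eq_neg_iff_add_eq_0 add.commute)

lemma D_diff: "Dv i (u - v) = Dv i u - Dv i v"
  using D_add[of i u "-v"] by (simp add: D_uminus)

lemma D_sum: "Dv i (sum g S) = (\<Sum>x\<in>S. Dv i (g x))"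
  by (induction S rule: infinite_finite_induct) (auto simp: D_add)

lemma D_one [simp]: "Dv i 1 = 0"
  using D_mult[of i 1 1] by simp

lemma D_of_nat [simp]: "Dv i (of_nat n) = 0"
  by (induction n) (simp_all add: D_add)

lemma D_Cmult: "Dv i (C c * u) = C c * Dv i u"
  by (simp add: D_mult D_C)

lemma D_ofnat_mult: "Dv i (of_nat n * u) = of_nat n * Dv i u"
  by (simp add: D_mult)

lemma D_power: "Dv i (u ^ Suc n) = of_nat (Suc n) * u ^ n * Dv i u"
  by (induction n) (simp_all add: D_mult algebra_simps)

lemma D_power': "Dv i (u ^ n) = of_nat n * u ^ (n - 1) * Dv i u"
proof (cases n)
  case 0 then show ?thesis by simp
next
  case (Suc m) then show ?thesis using D_power[of i u m] by (simp del: power_Suc of_nat_Suc)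
qed

lemma D_prod_const: "(\<And>x. x \<in> S \<Longrightarrow> Dv i (g x) = 0) \<Longrightarrow> Dv i (prod g S) = 0"
  by (induction S rule: infinite_finite_induct) (auto simp: D_mult)

definition xpow :: "'n mono \<Rightarrow> 'r" where
  "xpow c = (\<Prod>i\<in>UNIV. xv i ^ Poly_Mapping.lookup c i)"

definition Dpow :: "'n mono \<Rightarrow> 'r \<Rightarrow> 'r" where
  "Dpow b u = foldr (\<lambda>i. Dv i ^^ Poly_Mapping.lookup b i) var_list u"

definition mono :: "'n mono \<times> 'n mono \<Rightarrow> 'r \<Rightarrow> 'r" where
  "mono k u = xpow (fst k) * Dpow (snd k) u"

definition act :: "'n weyl \<Rightarrow> 'r \<Rightarrow> 'r" where
  "act P u = (\<Sum>k\<in>Poly_Mapping.keys P. C (Poly_Mapping.lookup P k) * mono k u)"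

lemma xpow_add: "xpow (a + c) = xpow a * xpow c"
  by (simp add: xpow_def lookup_add power_add prod.distrib)

lemma xpow_zero [simp]: "xpow 0 = 1"
  by (simp add: xpow_def)

lemma xpow_split: "xpow c = xv j ^ Poly_Mapping.lookup c j * (\<Prod>i\<in>UNIV - {j}. xv i ^ Poly_Mapping.lookup c i)"
  unfolding xpow_def by (rule prod.remove) auto

lemma D_xpow: "Dv j (xpow c) = of_nat (Poly_Mapping.lookup c j) * xpow (c - unitv j)"
proof -
  have r0: "Dv j (\<Prod>i\<in>UNIV - {j}. xv i ^ Poly_Mapping.lookup c i) = 0"
  proof (rule D_prod_const)
    fix i assume "i \<in> UNIV - {j}"
    then show "Dv j (xv i ^ Poly_Mapping.lookup c i) = 0" by (simp add: D_power' D_x)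
  qed
  have r1: "(\<Prod>i\<in>UNIV - {j}. xv i ^ Poly_Mapping.lookup (c - unitv j) i) = (\<Prod>i\<in>UNIV - {j}. xv i ^ Poly_Mapping.lookup c i)"
    by (rule prod.cong) (auto simp: lookup_minus lookup_unitv)
  show ?thesis
    by (simp add: xpow_split[of c j] xpow_split[of "c - unitv j" j] D_mult r0 r1 D_power' D_x lookup_minus lookup_unitv)
qed

lemma funpow_D_comm: "(Dv i ^^ n) (Dv j u) = Dv j ((Dv i ^^ n) u)"
  by (induction n) (simp_all add: D_comm)

lemma foldr_D_comm: "foldr (\<lambda>i. Dv i ^^ g i) xs (Dv j u) = Dv j (foldr (\<lambda>i. Dv i ^^ g i) xs u)"
  by (induction xs) (simp_all add: funpow_D_comm)

lemma foldr_D_step: "distinct xs \<Longrightarrow> j \<in> set xs \<Longrightarrow>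
   foldr (\<lambda>i. Dv i ^^ (g i + (if j = i then 1 else 0))) xs u = Dv j (foldr (\<lambda>i. Dv i ^^ g i) xs u)"
proof (induction xs)
  case Nil then show ?case by simp
next
  case (Cons i xs)
  show ?case
  proof (cases "i = j")
    case True
    then have "j \<notin> set xs" using Cons by auto
    then have "foldr (\<lambda>i. Dv i ^^ (g i + (if j = i then 1 else 0))) xs u = foldr (\<lambda>i. Dv i ^^ g i) xs u"
      by (intro foldr_cong) auto
    then show ?thesis using True by simp
  next
    case False
    then have "j \<in> set xs" "distinct xs" using Cons by auto
    then show ?thesis using Cons.IH False by (simp add: funpow_D_comm)
  qed
qed

lemma Dpow_step: "Dpow (b + unitv j) u = Dv j (Dpow b u)"
  unfolding Dpow_def lookup_add_unitv using var_list_props[where 'n='n]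
  by (intro foldr_D_step) auto

lemma Dpow_step': "Dpow (unitv j + b) u = Dv j (Dpow b u)"
  using Dpow_step[of b j u] by (simp add: add.commute)

lemma Dpow_zero [simp]: "Dpow 0 u = u"
proof -
  have "foldr (\<lambda>i. Dv i ^^ Poly_Mapping.lookup 0 i) xs u = u" for xs :: "'n list"
    by (induction xs) auto
  then show ?thesis by (simp add: Dpow_def)
qed

lemma Dpow_unitv: "Dpow (unitv j) u = Dv j u"
  using Dpow_step[of 0 j u] by simp

lemma Dpow_lin: "Dpow b (u + v) = Dpow b u + Dpow b v \<and> Dpow b (C c * u) = C c * Dpow b u"
  by (induction b arbitrary: u v rule: mono_induct) (simp_all add: Dpow_step D_add D_Cmult)

lemma Dpow_add_arg: "Dpow b (u + v) = Dpow b u + Dpow b v" using Dpow_lin by blast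
lemma Dpow_Cmult: "Dpow b (C c * u) = C c * Dpow b u" using Dpow_lin by blast

lemma Dpow_of_nat_mult: "Dpow b (of_nat n * u) = of_nat n * Dpow b u"
  using Dpow_Cmult[of b "of_nat n" u] by simp

lemma Dpow_zero_arg [simp]: "Dpow b 0 = 0"
  using Dpow_add_arg[of b 0 0] by simp

lemma Dpow_sum: "Dpow b (sum g S) = (\<Sum>x\<in>S. Dpow b (g x))"
  by (induction S rule: infinite_finite_induct) (auto simp: Dpow_add_arg)

lemma Dpow_add: "Dpow (b + d) u = Dpow b (Dpow d u)"
proof (induction b rule: mono_induct)
  case zero then show ?case by simp
next
  case (step b j)
  have "Dpow (b + unitv j + d) u = Dpow ((b + d) + unitv j) u" by (simp add: ac_simps)
  also have "\<dots> = Dv j (Dpow b (Dpow d u))" by (simp add: Dpow_step step)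
  finally show ?case by (simp add: Dpow_step)
qed


lemma leibniz: "Dpow b (xpow c * v) = (\<Sum>k\<in>Kc c. of_nat (coef b c k) * xpow (c - k) * Dpow (b - k) v)"
proof (induction b rule: mono_induct)
  case zero
  have z: "coef 0 c k = 0" if "k \<noteq> 0" for k
  proof (rule ccontr)
    assume "coef 0 c k \<noteq> 0"
    then have "\<forall>i. Poly_Mapping.lookup k i \<le> 0" using coef_nonzero[of 0 c k] by simp
    then have "k = 0" by (auto intro!: poly_mapping_eqI)
    then show False using that by simp
  qed
  have c00: "coef 0 c 0 = 1" by (simp add: coef_def)
  have "0 \<in> Kc c" by (simp add: Kc_def)
  then have "(\<Sum>k\<in>Kc c. of_nat (coef 0 c k) * xpow (c - k) * Dpow (0 - k) v) =
     of_nat (coef 0 c 0) * xpow (c - 0) * Dpow (0 - 0) v + (\<Sum>k\<in>Kc c - {0}. of_nat (coef 0 c k) * xpow (c - k) * Dpow (0 - k) v)"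
    by (simp add: sum.remove[OF finite_Kc])
  also have "(\<Sum>k\<in>Kc c - {0}. of_nat (coef 0 c k) * xpow (c - k) * Dpow (0 - k) v) = 0"
    by (rule sum.neutral) (auto simp: z)
  finally show ?case by (simp add: c00)
next
  case (step b j)
  let ?S = "Kc c"
  let ?cj = "Poly_Mapping.lookup c j"
  have "Dpow (b + unitv j) (xpow c * v) = Dv j (\<Sum>k\<in>?S. of_nat (coef b c k) * xpow (c - k) * Dpow (b - k) v)"
    by (simp add: Dpow_step step)
  also have "\<dots> = (\<Sum>k\<in>?S. of_nat (coef b c k) * xpow (c - k) * Dpow (b - k + unitv j) v) +
                  (\<Sum>k\<in>?S. of_nat (coef b c k) * of_nat (?cj - Poly_Mapping.lookup k j) * xpow (c - k - unitv j) * Dpow (b - k) v)"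
    by (simp add: D_sum mult.assoc D_ofnat_mult D_mult D_xpow Dpow_step Dpow_step' lookup_minus sum.distrib distrib_left ac_simps)
  finally have L: "Dpow (b + unitv j) (xpow c * v) = (\<Sum>k\<in>?S. of_nat (coef b c k) * xpow (c - k) * Dpow (b - k + unitv j) v) +
                  (\<Sum>k\<in>?S. of_nat (coef b c k) * of_nat (?cj - Poly_Mapping.lookup k j) * xpow (c - k - unitv j) * Dpow (b - k) v)" .
  have R: "(\<Sum>k\<in>?S. of_nat (coef (b + unitv j) c k) * xpow (c - k) * Dpow (b + unitv j - k) v) =
     (\<Sum>k\<in>?S. of_nat (coef b c k) * xpow (c - k) * Dpow (b + unitv j - k) v) +
     (\<Sum>k\<in>?S. if Poly_Mapping.lookup k j \<ge> 1 then of_nat ((?cj - (Poly_Mapping.lookup k j - 1)) * coef b c (k - unitv j)) * xpow (c - k) * Dpow (b + unitv j - k) v else 0)"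
    by (subst sum.distrib[symmetric]) (rule sum.cong[OF refl], auto simp: coef_step distrib_right)
  have A1: "(\<Sum>k\<in>?S. of_nat (coef b c k) * xpow (c - k) * Dpow (b + unitv j - k) v) =
            (\<Sum>k\<in>?S. of_nat (coef b c k) * xpow (c - k) * Dpow (b - k + unitv j) v)"
  proof (rule sum.cong[OF refl])
    fix k assume "k \<in> ?S"
    show "of_nat (coef b c k) * xpow (c - k) * Dpow (b + unitv j - k) v = of_nat (coef b c k) * xpow (c - k) * Dpow (b - k + unitv j) v"
    proof (cases "coef b c k = 0")
      case False
      then have "\<forall>i. Poly_Mapping.lookup k i \<le> Poly_Mapping.lookup b i" using coef_nonzero by blast
      then have "b + unitv j - k = b - k + unitv j"
        by (intro poly_mapping_eqI) (auto simp: lookup_add lookup_minus lookup_unitv)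
      then show ?thesis by simp
    qed simp
  qed
  let ?S1 = "{k\<in>?S. Poly_Mapping.lookup k j \<ge> 1}"
  let ?S2 = "{k\<in>?S. Poly_Mapping.lookup k j < ?cj}"
  have B2: "(\<Sum>k\<in>?S. if Poly_Mapping.lookup k j \<ge> 1 then of_nat ((?cj - (Poly_Mapping.lookup k j - 1)) * coef b c (k - unitv j)) * xpow (c - k) * Dpow (b + unitv j - k) v else 0)
      = (\<Sum>k\<in>?S1. of_nat ((?cj - (Poly_Mapping.lookup k j - 1)) * coef b c (k - unitv j)) * xpow (c - k) * Dpow (b + unitv j - k) v)"
    by (rule sum.inter_filter[OF finite_Kc, symmetric])
  also have "\<dots> = (\<Sum>k\<in>?S2. of_nat (coef b c k) * of_nat (?cj - Poly_Mapping.lookup k j) * xpow (c - k - unitv j) * Dpow (b - k) v)"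
  proof (rule sym, rule sum.reindex_bij_witness[of _ "\<lambda>k. k - unitv j" "\<lambda>k. k + unitv j"])
    fix k assume k: "k \<in> ?S1"
    show "k - unitv j + unitv j = k" using k by (intro poly_mapping_eqI) (auto simp: lookup_add lookup_minus lookup_unitv)
    have kc: "\<forall>i. Poly_Mapping.lookup k i \<le> Poly_Mapping.lookup c i" "1 \<le> Poly_Mapping.lookup k j" using k by (auto simp: Kc_def)
    then have kcj: "Poly_Mapping.lookup k j \<le> Poly_Mapping.lookup c j" by blast
    have "\<forall>i. Poly_Mapping.lookup (k - unitv j) i \<le> Poly_Mapping.lookup c i"
      using kc(1) by (auto simp: lookup_minus lookup_unitv intro: le_trans[OF diff_le_self])
    moreover have "Poly_Mapping.lookup (k - unitv j) j < Poly_Mapping.lookup c j"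
      using kc(2) kcj by (simp add: lookup_minus lookup_unitv)
    ultimately show "k - unitv j \<in> ?S2" by (simp add: Kc_def)
  next
    fix k assume k: "k \<in> ?S2"
    show "k + unitv j - unitv j = k" by (intro poly_mapping_eqI) (auto simp: lookup_add lookup_minus lookup_unitv)
    show "k + unitv j \<in> ?S1" using k by (auto simp: Kc_def lookup_add lookup_unitv)
    have e1: "c - (k + unitv j) = c - k - unitv j" by (intro poly_mapping_eqI) (auto simp: lookup_add lookup_minus lookup_unitv)
    have e2: "b + unitv j - (k + unitv j) = b - k" by (intro poly_mapping_eqI) (auto simp: lookup_add lookup_minus lookup_unitv)
    have e3: "k + unitv j - unitv j = k" by (intro poly_mapping_eqI) (auto simp: lookup_add lookup_minus lookup_unitv)
    show "of_nat ((?cj - (Poly_Mapping.lookup (k + unitv j) j - 1)) * coef b c (k + unitv j - unitv j)) * xpow (c - (k + unitv j)) * Dpow (b + unitv j - (k + unitv j)) v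
       = of_nat (coef b c k) * of_nat (?cj - Poly_Mapping.lookup k j) * xpow (c - k - unitv j) * Dpow (b - k) v"
      by (simp add: e1 e2 e3 lookup_add lookup_unitv ac_simps)
  qed
  also have "\<dots> = (\<Sum>k\<in>?S. of_nat (coef b c k) * of_nat (?cj - Poly_Mapping.lookup k j) * xpow (c - k - unitv j) * Dpow (b - k) v)"
  proof (rule sum.mono_neutral_left[OF finite_Kc])
    show "?S2 \<subseteq> ?S" by auto
    show "\<forall>k\<in>?S - ?S2. of_nat (coef b c k) * of_nat (?cj - Poly_Mapping.lookup k j) * xpow (c - k - unitv j) * Dpow (b - k) v = 0"
    proof
      fix k assume "k \<in> ?S - ?S2"
      then have "?cj - Poly_Mapping.lookup k j = 0" by auto
      then show "of_nat (coef b c k) * of_nat (?cj - Poly_Mapping.lookup k j) * xpow (c - k - unitv j) * Dpow (b - k) v = 0"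
        by (simp only: of_nat_0 mult_zero_left mult_zero_right)
    qed
  qed
  finally show ?case using L R A1 by simp
qed

lemma mono_add_arg: "mono k (u + v) = mono k u + mono k v"
  by (simp add: mono_def Dpow_add_arg distrib_left)
lemma mono_Cmult: "mono k (C c * u) = C c * mono k u"
  unfolding mono_def Dpow_Cmult by (simp add: ac_simps)
lemma mono_zero [simp]: "mono k 0 = 0"
  by (simp add: mono_def)
lemma mono_sum: "mono k (sum g S) = (\<Sum>x\<in>S. mono k (g x))"
  by (induction S rule: infinite_finite_induct) (auto simp: mono_add_arg)

lemma act_gen: "finite S \<Longrightarrow> Poly_Mapping.keys P \<subseteq> S \<Longrightarrow> act P u = (\<Sum>k\<in>S. C (Poly_Mapping.lookup P k) * mono k u)"
  unfolding act_def by (rule sum.mono_neutral_left) (auto simp: in_keys_iff)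

lemma act_zero [simp]: "act 0 u = 0"
  by (simp add: act_def)

lemma act_add: "act (P + Q) u = act P u + act Q u"
proof -
  let ?S = "Poly_Mapping.keys P \<union> Poly_Mapping.keys Q"
  have "act (P + Q) u = (\<Sum>k\<in>?S. C (Poly_Mapping.lookup (P + Q) k) * mono k u)"
    by (rule act_gen) (use keys_add[of P Q] in auto)
  also have "\<dots> = act P u + act Q u"
    by (simp add: act_gen[of ?S P] act_gen[of ?S Q] lookup_add C_add distrib_right sum.distrib)
  finally show ?thesis .
qed

lemma act_sum: "act (sum g S) u = (\<Sum>x\<in>S. act (g x) u)"
  by (induction S rule: infinite_finite_induct) (auto simp: act_add)

lemma act_single: "act (Poly_Mapping.single k c) u = C c * mono k u"
  by (subst act_gen[of "{k}"]) auto

lemma act_map: "act (Poly_Mapping.map (\<lambda>z. s * z) P) u = C s * act P u"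
proof -
  have "act (Poly_Mapping.map (\<lambda>z. s * z) P) u = (\<Sum>k\<in>Poly_Mapping.keys P. C (Poly_Mapping.lookup (Poly_Mapping.map (\<lambda>z. s * z) P) k) * mono k u)"
    by (rule act_gen) (auto simp: in_keys_iff Poly_Mapping.map.rep_eq when_def)
  also have "\<dots> = C s * act P u"
    unfolding act_def sum_distrib_left
    by (rule sum.cong[OF refl]) (simp add: in_keys_iff Poly_Mapping.map.rep_eq when_def C_mult mult.assoc)
  finally show ?thesis .
qed

lemma act_wmm: "act (weyl_mono_mult a b c d) u = mono (a, b) (mono (c, d) u)"
proof -
  let ?K = "{k. \<forall>i. Poly_Mapping.lookup k i \<le> Poly_Mapping.lookup b i \<and> Poly_Mapping.lookup k i \<le> Poly_Mapping.lookup c i}"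
  have KK: "?K \<subseteq> Kc c" by (auto simp: Kc_def)
  have cf: "(\<Prod>i\<in>UNIV. fact (Poly_Mapping.lookup k i) * (Poly_Mapping.lookup b i choose Poly_Mapping.lookup k i) * (Poly_Mapping.lookup c i choose Poly_Mapping.lookup k i)) = coef b c k" for k
    by (simp add: coef_def phi_def)
  have "act (weyl_mono_mult a b c d) u = (\<Sum>k\<in>?K. of_nat (coef b c k) * mono (a + c - k, b + d - k) u)"
    unfolding weyl_mono_mult_def act_sum act_single cf by simp
  also have "\<dots> = (\<Sum>k\<in>?K. xpow a * (of_nat (coef b c k) * xpow (c - k) * Dpow (b - k) (Dpow d u)))"
  proof (rule sum.cong[OF refl])
    fix k assume k: "k \<in> ?K"
    have e1: "a + c - k = a + (c - k)" using k by (intro poly_mapping_eqI) (auto simp: lookup_add lookup_minus)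
    have e2: "b + d - k = (b - k) + d" using k by (intro poly_mapping_eqI) (auto simp: lookup_add lookup_minus)
    show "of_nat (coef b c k) * mono (a + c - k, b + d - k) u = xpow a * (of_nat (coef b c k) * xpow (c - k) * Dpow (b - k) (Dpow d u))"
      unfolding mono_def fst_conv snd_conv e1 e2 xpow_add Dpow_add by (simp add: ac_simps)
  qed
  also have "\<dots> = (\<Sum>k\<in>Kc c. xpow a * (of_nat (coef b c k) * xpow (c - k) * Dpow (b - k) (Dpow d u)))"
  proof (rule sum.mono_neutral_left[OF finite_Kc KK], rule ballI)
    fix k assume k: "k \<in> Kc c - ?K"
    have "coef b c k = 0"
    proof (rule ccontr)
      assume "coef b c k \<noteq> 0"
      then have "k \<in> ?K" using coef_nonzero[of b c k] by blast
      then show False using k by blast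
    qed
    then show "xpow a * (of_nat (coef b c k) * xpow (c - k) * Dpow (b - k) (Dpow d u)) = 0" by simp
  qed
  also have "\<dots> = mono (a, b) (mono (c, d) u)"
    by (simp add: mono_def leibniz sum_distrib_left)
  finally show ?thesis .
qed

lemma act_mult: "act (weyl_mult P Q) u = act P (act Q u)"
proof -
  have "act (weyl_mult P Q) u = (\<Sum>p\<in>Poly_Mapping.keys P. \<Sum>q\<in>Poly_Mapping.keys Q.
      C (Poly_Mapping.lookup P p) * (C (Poly_Mapping.lookup Q q) * mono p (mono q u)))"
    unfolding weyl_mult_def by (simp add: split_def act_sum act_map act_wmm C_mult ac_simps)
  also have "\<dots> = act P (act Q u)"
    by (simp add: act_def mono_sum mono_Cmult sum_distrib_left)
  finally show ?thesis .
qed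

lemma act_zero_arg [simp]: "act P 0 = 0"
  by (simp add: act_def)

lemma act_lig: assumes "\<And>P. P \<in> S \<Longrightarrow> act P u = 0" shows "A \<in> left_ideal_gen S \<Longrightarrow> act A u = 0"
  by (induction rule: left_ideal_gen.induct) (auto simp: assms act_add act_mult)

end


lemma single_mono_leibniz:
  "Poly_Mapping.single (a + b - unitv i) (c * of_nat (Poly_Mapping.lookup (a + b) i)) =
   Poly_Mapping.single (a - unitv i + b) (c * of_nat (Poly_Mapping.lookup a i)) +
   Poly_Mapping.single (a + b - unitv i) (c * of_nat (Poly_Mapping.lookup b i))"
proof (cases "Poly_Mapping.lookup a i = 0")
  case True
  then show ?thesis by (simp add: lookup_add)
next
  case False
  then have "a - unitv i + b = a + b - unitv i"
    by (intro poly_mapping_eqI) (auto simp: lookup_add lookup_minus lookup_unitv)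
  then show ?thesis by (simp add: lookup_add single_add[symmetric] distrib_left)
qed

lemma pderiv_def_sum: "pderiv_mp i p = (\<Sum>a\<in>Poly_Mapping.keys p. Poly_Mapping.single (a - unitv i) (Poly_Mapping.lookup p a * of_nat (Poly_Mapping.lookup a i)))"
  by (simp add: pderiv_mp_def)

lemma pderiv_mult: "pderiv_mp i ((p::'n::finite mpoly) * q) = pderiv_mp i p * q + p * pderiv_mp i q"
proof -
  have "pderiv_mp i (p * q) = (\<Sum>a\<in>Poly_Mapping.keys p. \<Sum>b\<in>Poly_Mapping.keys q.
     Poly_Mapping.single (a + b - unitv i) (Poly_Mapping.lookup p a * Poly_Mapping.lookup q b * of_nat (Poly_Mapping.lookup (a + b) i)))"
    by (simp add: mult_sum_mono[of p q] pderiv_sum pderiv_single)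
  also have "\<dots> = (\<Sum>a\<in>Poly_Mapping.keys p. \<Sum>b\<in>Poly_Mapping.keys q.
     Poly_Mapping.single (a - unitv i + b) (Poly_Mapping.lookup p a * Poly_Mapping.lookup q b * of_nat (Poly_Mapping.lookup a i)) +
     Poly_Mapping.single (a + b - unitv i) (Poly_Mapping.lookup p a * Poly_Mapping.lookup q b * of_nat (Poly_Mapping.lookup b i)))"
    by (simp only: single_mono_leibniz)
  also have "\<dots> = pderiv_mp i p * q + p * pderiv_mp i q"
  proof -
    have 1: "pderiv_mp i p * q = (\<Sum>a\<in>Poly_Mapping.keys p. \<Sum>b\<in>Poly_Mapping.keys q.
       Poly_Mapping.single (a - unitv i + b) (Poly_Mapping.lookup p a * Poly_Mapping.lookup q b * of_nat (Poly_Mapping.lookup a i)))"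
      by (subst mp_sum_mono[of q]) (simp add: pderiv_def_sum sum_product mult_single ac_simps, rule sum.swap)
    have 2: "p * pderiv_mp i q = (\<Sum>a\<in>Poly_Mapping.keys p. \<Sum>b\<in>Poly_Mapping.keys q.
       Poly_Mapping.single (a + b - unitv i) (Poly_Mapping.lookup p a * Poly_Mapping.lookup q b * of_nat (Poly_Mapping.lookup b i)))"
    proof -
      have "p * pderiv_mp i q = (\<Sum>a\<in>Poly_Mapping.keys p. \<Sum>b\<in>Poly_Mapping.keys q.
         Poly_Mapping.single (a + (b - unitv i)) (Poly_Mapping.lookup p a * (Poly_Mapping.lookup q b * of_nat (Poly_Mapping.lookup b i))))"
        by (subst mp_sum_mono[of p]) (simp add: pderiv_def_sum sum_product mult_single)
      also have "\<dots> = (\<Sum>a\<in>Poly_Mapping.keys p. \<Sum>b\<in>Poly_Mapping.keys q.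
         Poly_Mapping.single (a + b - unitv i) (Poly_Mapping.lookup p a * Poly_Mapping.lookup q b * of_nat (Poly_Mapping.lookup b i)))"
      proof (intro sum.cong refl)
        fix a b
        show "Poly_Mapping.single (a + (b - unitv i)) (Poly_Mapping.lookup p a * (Poly_Mapping.lookup q b * of_nat (Poly_Mapping.lookup b i))) =
          Poly_Mapping.single (a + b - unitv i) (Poly_Mapping.lookup p a * Poly_Mapping.lookup q b * of_nat (Poly_Mapping.lookup b i))"
        proof (cases "Poly_Mapping.lookup b i = 0")
          case False
          then have "a + (b - unitv i) = a + b - unitv i"
            by (intro poly_mapping_eqI) (auto simp: lookup_add lookup_minus lookup_unitv)
          then show ?thesis by (simp add: ac_simps)
        qed simp
      qed
      finally show ?thesis .
    qed
    show ?thesis unfolding 1 2 by (simp add: sum.distrib)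
  qed
  finally show ?thesis .
qed

lemma pderiv_comm: "pderiv_mp i (pderiv_mp j p) = pderiv_mp j (pderiv_mp i p)"
proof -
  have m: "pderiv_mp i (pderiv_mp j (Poly_Mapping.single a c)) = pderiv_mp j (pderiv_mp i (Poly_Mapping.single a c))" for a c
  proof -
    have e: "a - unitv j - unitv i = a - unitv i - unitv j"
      by (intro poly_mapping_eqI) (auto simp: lookup_minus lookup_unitv)
    have f: "Poly_Mapping.lookup a j * Poly_Mapping.lookup (a - unitv j) i = Poly_Mapping.lookup a i * Poly_Mapping.lookup (a - unitv i) j"
      by (auto simp: lookup_minus lookup_unitv)
    have f': "(of_nat (Poly_Mapping.lookup a j) * of_nat (Poly_Mapping.lookup (a - unitv j) i) :: complex) =
              of_nat (Poly_Mapping.lookup a i) * of_nat (Poly_Mapping.lookup (a - unitv i) j)"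
      using f by (metis of_nat_mult)
    show ?thesis by (simp add: pderiv_single e mult.assoc f')
  qed
  show ?thesis
    by (subst (1 2) mp_sum_mono[of p]) (simp add: pderiv_sum m)
qed

lemma pderiv_const: "pderiv_mp i (Poly_Mapping.single 0 c) = 0"
  by (simp add: pderiv_single)

lemma pderiv_one [simp]: "pderiv_mp i 1 = 0"
  using pderiv_const[of i 1] by simp

lemma pderiv_var: "pderiv_mp i (Poly_Mapping.single (unitv j) 1) = (if i = j then 1 else 0)"
  by (auto simp: pderiv_single lookup_unitv)

section \<open>a copy of the polynomial ring that is an integral domain\<close>

typedef (overloaded) 'n mp = "UNIV :: ('n::finite) mpoly set" morphisms rep_mp Abs_mp by simp

setup_lifting type_definition_mp

instantiation mp :: (finite) idom
begin
lift_definition zero_mp :: "'n::finite mp" is 0 .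
lift_definition one_mp :: "'n::finite mp" is 1 .
lift_definition plus_mp :: "'n::finite mp \<Rightarrow> 'n mp \<Rightarrow> 'n mp" is "(+)" .
lift_definition minus_mp :: "'n::finite mp \<Rightarrow> 'n mp \<Rightarrow> 'n mp" is "(-)" .
lift_definition uminus_mp :: "'n::finite mp \<Rightarrow> 'n mp" is uminus .
lift_definition times_mp :: "'n::finite mp \<Rightarrow> 'n mp \<Rightarrow> 'n mp" is "(*)" .
instance
proof
  fix a b c :: "'n::finite mp"
  show "a * b * c = a * (b * c)" by transfer (simp add: ac_simps)
  show "a * b = b * a" by transfer (simp add: ac_simps)
  show "1 * a = a" by transfer simp
  show "a + b + c = a + (b + c)" by transfer (simp add: ac_simps)
  show "a + b = b + a" by transfer (simp add: ac_simps)
  show "0 + a = a" by transfer simp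
  show "- a + a = 0" by transfer simp
  show "a - b = a + - b" by transfer simp
  show "(a + b) * c = a * c + b * c" by transfer (simp add: distrib_right)
  show "(0::'n mp) \<noteq> 1" by transfer simp
  show "a \<noteq> 0 \<Longrightarrow> b \<noteq> 0 \<Longrightarrow> a * b \<noteq> 0" by transfer (rule mp_mult_nonzero)
  show "0 * a = 0" by transfer simp
  show "a * 0 = 0" by transfer simp
  show "a * (b + c) = a * b + a * c" by transfer (simp add: distrib_left)
qed
end

lift_definition dmp :: "'n \<Rightarrow> 'n::finite mp \<Rightarrow> 'n mp" is pderiv_mp .

lemma dmp_add: "dmp i (a + b) = dmp i a + dmp i b" by transfer (rule pderiv_add)
lemma dmp_mult: "dmp i (a * b) = dmp i a * b + a * dmp i b" by transfer (rule pderiv_mult)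
lemma dmp_uminus: "dmp i (- a) = - dmp i a" by transfer (rule pderiv_uminus)
lemma dmp_diff: "dmp i (a - b) = dmp i a - dmp i b" by transfer (rule pderiv_diff)
lemma dmp_comm: "dmp i (dmp j a) = dmp j (dmp i a)" by transfer (rule pderiv_comm)
lemma dmp_one [simp]: "dmp i 1 = 0" by transfer simp

definition embm :: "'n::finite mpoly \<Rightarrow> 'n mp" where "embm = Abs_mp"

lemma embm_add: "embm (p + q) = embm p + embm q" unfolding embm_def plus_mp_def by (simp add: Abs_mp_inverse)
lemma embm_mult: "embm (p * q) = embm p * embm q" unfolding embm_def times_mp_def by (simp add: Abs_mp_inverse)
lemma embm_uminus: "embm (- p) = - embm p" unfolding embm_def uminus_mp_def by (simp add: Abs_mp_inverse)
lemma embm_zero: "embm 0 = 0" unfolding embm_def zero_mp_def by simp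
lemma embm_one: "embm 1 = 1" unfolding embm_def one_mp_def by simp
lemma embm_inj: "embm p = embm q \<Longrightarrow> p = q" unfolding embm_def by (simp add: Abs_mp_inject)
lemma dmp_embm: "dmp i (embm p) = embm (pderiv_mp i p)" unfolding embm_def dmp_def by (simp add: Abs_mp_inverse)

definition emb :: "'n::finite mpoly \<Rightarrow> 'n mp fract" where
  "emb p = Fract (embm p) 1"

lift_definition dfr :: "'n \<Rightarrow> 'n::finite mp fract \<Rightarrow> 'n mp fract"
  is "\<lambda>i x. (dmp i (fst x) * snd x - fst x * dmp i (snd x), snd x * snd x)"
proof -
  fix i :: 'n and x y :: "'n mp \<times> 'n mp"
  assume "fractrel x y"
  then obtain a b c d where xy: "x = (a, b)" "y = (c, d)" "b \<noteq> 0" "d \<noteq> 0" "a * d = c * b"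
    by (cases x, cases y) auto
  have H: "dmp i a * d + a * dmp i d = dmp i c * b + c * dmp i b"
    using arg_cong[OF xy(5), of "dmp i"] by (simp add: dmp_mult)
  have "(dmp i a * b - a * dmp i b) * (d * d) = (dmp i c * d - c * dmp i d) * (b * b)"
    using xy(5) H by algebra
  then show "fractrel (dmp i (fst x) * snd x - fst x * dmp i (snd x), snd x * snd x) (dmp i (fst y) * snd y - fst y * dmp i (snd y), snd y * snd y)"
    using xy by simp
qed

lemma dfr_Fract: "b \<noteq> 0 \<Longrightarrow> dfr i (Fract a b) = Fract (dmp i a * b - a * dmp i b) (b * b)"
  by transfer simp

lemma emb_add: "emb (p + q) = emb p + emb q" by (simp add: emb_def embm_add)
lemma emb_mult: "emb (p * q) = emb p * emb q" by (simp add: emb_def embm_mult)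
lemma emb_uminus: "emb (- p) = - emb p" by (simp add: emb_def embm_uminus)
lemma emb_diff: "emb (p - q) = emb p - emb q" using emb_add[of p "-q"] by (simp add: emb_uminus)
lemma emb_zero [simp]: "emb 0 = 0" by (simp add: emb_def embm_zero Zero_fract_def)
lemma emb_one [simp]: "emb 1 = 1" by (simp add: emb_def embm_one One_fract_def)
lemma emb_power: "emb (p ^ n) = emb p ^ n" by (induction n) (simp_all add: emb_mult)
lemma emb_sum: "emb (sum g S) = (\<Sum>x\<in>S. emb (g x))"
  by (induction S rule: infinite_finite_induct) (simp_all add: emb_add)
lemma emb_inj: "emb p = emb q \<Longrightarrow> p = q" by (simp add: emb_def eq_fract embm_inj)
lemma emb_eq_0: "emb p = 0 \<longleftrightarrow> p = 0" using emb_inj[of p 0] by auto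
lemma dfr_emb: "dfr i (emb p) = emb (pderiv_mp i p)" by (simp add: emb_def dfr_Fract dmp_embm)

lemma dfr_add: "dfr i (x + y) = dfr i x + dfr i y"
proof -
  obtain a b where x: "x = Fract a b" "b \<noteq> 0" by (cases x)
  obtain c d where y: "y = Fract c d" "d \<noteq> 0" by (cases y)
  show ?thesis using x y by (simp add: dfr_Fract dmp_add dmp_mult eq_fract algebra_simps)
qed

lemma dfr_mult: "dfr i (x * y) = dfr i x * y + x * dfr i y"
proof -
  obtain a b where x: "x = Fract a b" "b \<noteq> 0" by (cases x)
  obtain c d where y: "y = Fract c d" "d \<noteq> 0" by (cases y)
  show ?thesis using x y by (simp add: dfr_Fract dmp_add dmp_mult eq_fract algebra_simps)
qed

lemma dfr_comm: "dfr i (dfr j x) = dfr j (dfr i x)"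
proof -
  obtain a b where x: "x = Fract a b" "b \<noteq> 0" by (cases x)
  show ?thesis using x by (simp add: dfr_Fract dmp_add dmp_mult dmp_diff eq_fract algebra_simps dmp_comm)
qed

interpretation fr: wmod "\<lambda>c. emb (Poly_Mapping.single 0 c)" "\<lambda>j. emb (Poly_Mapping.single (unitv j) 1)" dfr
proof
  fix a b :: complex and i j u v
  show "emb (Poly_Mapping.single 0 (a + b)) = emb (Poly_Mapping.single 0 a) + emb (Poly_Mapping.single 0 b)"
    by (simp add: emb_add[symmetric] single_add)
  show "emb (Poly_Mapping.single 0 (a * b)) = emb (Poly_Mapping.single 0 a) * emb (Poly_Mapping.single 0 b)"
    by (simp add: emb_mult[symmetric] mult_single)
  show "emb (Poly_Mapping.single 0 1) = 1" by simp
  show "dfr i (u + v) = dfr i u + dfr i v" by (rule dfr_add)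
  show "dfr i (u * v) = dfr i u * v + u * dfr i v" by (rule dfr_mult)
  show "dfr i (emb (Poly_Mapping.single 0 a)) = 0" by (simp add: dfr_emb pderiv_const)
  show "dfr i (emb (Poly_Mapping.single (unitv j) 1)) = (if i = j then 1 else 0)" by (simp add: dfr_emb pderiv_var)
  show "dfr i (dfr j u) = dfr j (dfr i u)" by (rule dfr_comm)
qed

abbreviation Cf :: "complex \<Rightarrow> 'n::finite mp fract" where "Cf c \<equiv> emb (Poly_Mapping.single 0 c)"
abbreviation xf :: "'n::finite \<Rightarrow> 'n mp fract" where "xf j \<equiv> emb (Poly_Mapping.single (unitv j) 1)"

lemma emb_of_nat: "emb (of_nat n) = of_nat n"
  by (induction n) (simp_all add: emb_add)

lemma emb_prod: "emb (prod g S) = (\<Prod>x\<in>S. emb (g x))"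
  by (induction S rule: infinite_finite_induct) (simp_all add: emb_mult)

lemma single_unitv_power: "(Poly_Mapping.single (unitv i) (1::complex)) ^ n = Poly_Mapping.single (Poly_Mapping.single i n) 1"
proof (induction n)
  case 0 then show ?case by simp
next
  case (Suc n)
  have "unitv i + Poly_Mapping.single i n = Poly_Mapping.single i (Suc n)"
    by (simp add: unitv_def single_add[symmetric])
  then show ?case using Suc by (simp add: mult_single)
qed

lemma prod_single_one: "(\<Prod>i\<in>S. Poly_Mapping.single (g i) (1::complex)) = Poly_Mapping.single (\<Sum>i\<in>S. g i) 1"
  by (induction S rule: infinite_finite_induct) (simp_all add: mult_single)

lemma sum_single_lookup: "(\<Sum>i\<in>UNIV. Poly_Mapping.single i (Poly_Mapping.lookup a i)) = (a :: 'n::finite mono)"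
  by (rule poly_mapping_eqI) (simp add: lookup_sum lookup_single when_def)

lemma xpow_emb: "fr.xpow a = emb (xmono a)"
proof -
  have "fr.xpow a = emb (\<Prod>i\<in>UNIV. (Poly_Mapping.single (unitv i) 1) ^ Poly_Mapping.lookup a i)"
    by (simp add: fr.xpow_def emb_prod emb_power)
  also have "\<dots> = emb (xmono a)"
    by (simp add: single_unitv_power prod_single_one sum_single_lookup xmono_def)
  finally show ?thesis .
qed

lemma emb_single: "emb (Poly_Mapping.single a c) = Cf c * fr.xpow a"
proof -
  have "Poly_Mapping.single a c = Poly_Mapping.single 0 c * xmono a" by (simp add: xmono_def mult_single)
  then show ?thesis by (simp add: emb_mult xpow_emb)
qed

lemma emb_cmul: "emb (cmul c p) = Cf c * emb p"
  by (simp add: cmul_conv emb_mult)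

lemma Cf_inj: "Cf a = Cf b \<Longrightarrow> a = b"
  using emb_inj by (metis inj_single[THEN injD] )

lemma dfr_inverse: "u \<noteq> 0 \<Longrightarrow> dfr i (inverse u) = - dfr i u * inverse u ^ 2"
proof -
  assume u: "u \<noteq> 0"
  have "0 = dfr i (u * inverse u)" using u by simp
  also have "\<dots> = dfr i u * inverse u + u * dfr i (inverse u)" by (rule dfr_mult)
  finally have "u * dfr i (inverse u) = - dfr i u * inverse u" by (simp add: eq_neg_iff_add_eq_0 add.commute)
  then have "dfr i (inverse u) = inverse u * (- dfr i u * inverse u)" using u by (simp add: field_simps)
  then show ?thesis by (simp add: power2_eq_square ac_simps)
qed

definition val :: "'n::finite mpoly \<Rightarrow> 'n mpoly \<times> nat \<Rightarrow> 'n mp fract" where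
  "val q x = emb (fst x) * inverse (emb q) ^ snd x"

lemma val_dstep: assumes q: "q \<noteq> 0" shows "val q (dstep q i x) = dfr i (val q x)"
proof -
  obtain h m where x: "x = (h, m)" by (cases x)
  let ?Q = "emb q"
  have Q: "?Q \<noteq> 0" using q emb_eq_0 by auto
  have "dfr i (val q x) = emb (pderiv_mp i h) * inverse ?Q ^ m + emb h * (of_nat m * inverse ?Q ^ (m - 1) * (- emb (pderiv_mp i q) * inverse ?Q ^ 2))"
    by (simp add: val_def x dfr_mult dfr_emb fr.D_power' dfr_inverse[OF Q])
  also have "\<dots> = val q (dstep q i x)"
  proof (cases m)
    case 0 then show ?thesis
      using Q unfolding val_def x dstep_def fst_conv snd_conv emb_diff emb_mult emb_of_nat by (simp add: field_simps power2_eq_square)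
  next
    case (Suc k) then show ?thesis
      using Q unfolding val_def x dstep_def fst_conv snd_conv emb_diff emb_mult emb_of_nat by (simp add: field_simps power2_eq_square)
  qed
  finally show ?thesis by simp
qed

lemma val_funpow: "q \<noteq> 0 \<Longrightarrow> val q ((dstep q i ^^ n) x) = (dfr i ^^ n) (val q x)"
  by (induction n) (simp_all add: val_dstep)

lemma val_foldr: "q \<noteq> 0 \<Longrightarrow> val q (foldr (\<lambda>i. dstep q i ^^ g i) xs x) = foldr (\<lambda>i. dfr i ^^ g i) xs (val q x)"
  by (induction xs) (simp_all add: val_funpow)

lemma val_dpow: "q \<noteq> 0 \<Longrightarrow> val q (dpow_inv q l b) = fr.Dpow b (inverse (emb q) ^ l)"
proof -
  assume q: "q \<noteq> 0"
  have "val q (1, l) = inverse (emb q) ^ l" by (simp add: val_def)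
  then show ?thesis unfolding dpow_inv_def fr.Dpow_def using val_foldr[OF q] by metis
qed

lemma ann_iff: fixes q :: "'n::finite mpoly" assumes q: "q \<noteq> 0"
  shows "P \<in> Ann_inv_pow q l \<longleftrightarrow> fr.act P (inverse (emb q) ^ l) = 0"
proof -
  let ?Q = "emb q"
  have Q: "?Q \<noteq> 0" using q emb_eq_0 by auto
  define K where "K = Poly_Mapping.keys P"
  define hb where "hb b = fst (dpow_inv q l b)" for b
  define mb where "mb b = snd (dpow_inv q l b)" for b
  define N where "N = (\<Sum>(a,b)\<in>K. mb b)"
  have finK: "finite K" by (simp add: K_def)
  have mbN: "\<And>a b. (a,b) \<in> K \<Longrightarrow> mb b \<le> N"
    unfolding N_def using finK by (metis (mono_tags, lifting) case_prod_conv member_le_sum zero_le)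
  have ann: "P \<in> Ann_inv_pow q l \<longleftrightarrow> (\<Sum>(a,b)\<in>K. cmul (Poly_Mapping.lookup P (a,b)) (xmono a * hb b * q ^ (N - mb b))) = 0"
    by (simp add: Ann_inv_pow_def annihilates_def Let_def K_def N_def hb_def mb_def)
  have E: "emb (\<Sum>(a,b)\<in>K. cmul (Poly_Mapping.lookup P (a,b)) (xmono a * hb b * q ^ (N - mb b))) = ?Q ^ N * fr.act P (inverse ?Q ^ l)"
  proof -
    have "emb (\<Sum>(a,b)\<in>K. cmul (Poly_Mapping.lookup P (a,b)) (xmono a * hb b * q ^ (N - mb b))) =
       (\<Sum>k\<in>K. Cf (Poly_Mapping.lookup P k) * (fr.xpow (fst k) * emb (hb (snd k)) * ?Q ^ (N - mb (snd k))))"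
      by (simp add: emb_sum split_def emb_cmul emb_mult emb_power xpow_emb)
    also have "\<dots> = (\<Sum>k\<in>K. ?Q ^ N * (Cf (Poly_Mapping.lookup P k) * fr.mono k (inverse ?Q ^ l)))"
    proof (rule sum.cong[OF refl])
      fix k assume k: "k \<in> K"
      obtain a b where ab: "k = (a, b)" by (cases k)
      have le: "mb b \<le> N" using mbN k ab by simp
      have D: "fr.Dpow b (inverse ?Q ^ l) = emb (hb b) * inverse ?Q ^ mb b"
        using val_dpow[OF q, of l b] by (simp add: val_def hb_def mb_def)
      have "?Q ^ (N - mb b) = ?Q ^ N * inverse ?Q ^ mb b"
        using Q le by (simp add: power_diff field_simps power_inverse)
      then show "Cf (Poly_Mapping.lookup P k) * (fr.xpow (fst k) * emb (hb (snd k)) * ?Q ^ (N - mb (snd k))) =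
          ?Q ^ N * (Cf (Poly_Mapping.lookup P k) * fr.mono k (inverse ?Q ^ l))"
        by (simp add: ab fr.mono_def D ac_simps)
    qed
    also have "\<dots> = ?Q ^ N * fr.act P (inverse ?Q ^ l)"
      by (simp add: fr.act_def K_def sum_distrib_left)
    finally show ?thesis .
  qed
  show ?thesis unfolding ann emb_eq_0[symmetric] E using Q by simp
qed

lemma Ann_pow_eq: fixes f :: "'n::finite mpoly" assumes "f \<noteq> 0"
  shows "Ann_inv_pow f l = Ann_inv_pow (f ^ l) 1"
proof -
  have "f ^ l \<noteq> 0" using assms mp_power_nonzero by auto
  then show ?thesis using assms by (auto simp: ann_iff emb_power power_inverse)
qed

lemma Ann_lig: fixes G :: "'n::finite mpoly" assumes "G \<noteq> 0" "S \<subseteq> Ann_inv_pow G l"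
  shows "left_ideal_gen S \<subseteq> Ann_inv_pow G l"
proof
  fix A assume "A \<in> left_ideal_gen S"
  then have "fr.act A (inverse (emb G) ^ l) = 0"
    by (rule fr.act_lig[rotated]) (use assms in \<open>auto simp: ann_iff\<close>)
  then show "A \<in> Ann_inv_pow G l" using assms by (simp add: ann_iff)
qed

definition thetap :: "real^'n \<Rightarrow> 'n::finite mpoly \<Rightarrow> 'n mpoly" where
  "thetap w p = (\<Sum>a\<in>Poly_Mapping.keys p. Poly_Mapping.single a (Poly_Mapping.lookup p a * complex_of_real (wtm w a)))"

lemma lookup_thetap: "Poly_Mapping.lookup (thetap w p) a = Poly_Mapping.lookup p a * complex_of_real (wtm w a)"
  by (simp add: thetap_def lookup_sum lookup_single when_def in_keys_iff split: if_splits)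

lemma thetap_add: "thetap w (p + q) = thetap w p + thetap w q"
  by (rule poly_mapping_eqI) (simp add: lookup_thetap lookup_add distrib_right)
lemma thetap_zero [simp]: "thetap w 0 = 0"
  by (rule poly_mapping_eqI) (simp add: lookup_thetap)
lemma thetap_sum: "thetap w (sum g S) = (\<Sum>x\<in>S. thetap w (g x))"
  by (rule poly_mapping_eqI) (simp add: lookup_thetap lookup_sum sum_distrib_right)
lemma thetap_single: "thetap w (Poly_Mapping.single a c) = Poly_Mapping.single a (c * complex_of_real (wtm w a))"
  by (rule poly_mapping_eqI) (simp add: lookup_thetap lookup_single when_def)

lemma single_sum_gen: "(\<Sum>x\<in>S. Poly_Mapping.single a (f x)) = Poly_Mapping.single a (\<Sum>x\<in>S. f x)"
  by (induction S rule: infinite_finite_induct) (simp_all add: single_add)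

definition Lth :: "real^'n \<Rightarrow> 'n::finite mpoly \<Rightarrow> 'n mpoly" where
  "Lth w p = (\<Sum>i\<in>UNIV. Poly_Mapping.single 0 (complex_of_real (w $ i)) * Poly_Mapping.single (unitv i) 1 * pderiv_mp i p)"

lemma Lth_sum: "Lth w (sum g S) = (\<Sum>x\<in>S. Lth w (g x))"
  unfolding Lth_def pderiv_sum sum_distrib_left by (rule sum.swap)

lemma Lth_single: "Lth w (Poly_Mapping.single a c) = thetap w (Poly_Mapping.single a c)"
proof -
  have t: "Poly_Mapping.single 0 (complex_of_real (w $ i)) * Poly_Mapping.single (unitv i) 1 * pderiv_mp i (Poly_Mapping.single a c)
      = Poly_Mapping.single a (c * complex_of_real (real (Poly_Mapping.lookup a i) * w $ i))" for i
  proof (cases "Poly_Mapping.lookup a i = 0")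
    case True then show ?thesis by (simp add: pderiv_single)
  next
    case False
    then have "unitv i + (a - unitv i) = a" by (intro poly_mapping_eqI) (auto simp: lookup_add lookup_minus lookup_unitv)
    then show ?thesis by (simp add: pderiv_single mult_single ac_simps)
  qed
  have "Lth w (Poly_Mapping.single a c) = (\<Sum>i\<in>UNIV. Poly_Mapping.single a (c * complex_of_real (real (Poly_Mapping.lookup a i) * w $ i)))"
    unfolding Lth_def t ..
  also have "\<dots> = Poly_Mapping.single a (c * complex_of_real (wtm w a))"
    by (simp add: wtm_sum single_sum_gen sum_distrib_left of_real_sum)
  finally show ?thesis by (simp add: thetap_single)
qed

lemma Lth_thetap: "Lth w p = thetap w p"
  by (subst (1 2) mp_sum_mono[of p]) (simp add: Lth_sum thetap_sum Lth_single)

definition fth :: "real^'n \<Rightarrow> 'n::finite mp fract \<Rightarrow> 'n mp fract" where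
  "fth w u = (\<Sum>i\<in>UNIV. Cf (complex_of_real (w $ i)) * xf i * dfr i u)"

lemma fth_emb: "fth w (emb p) = emb (thetap w p)"
  by (simp add: fth_def dfr_emb Lth_thetap[symmetric] Lth_def emb_sum emb_mult)

lemma fth_inverse: "u \<noteq> 0 \<Longrightarrow> fth w (inverse u) = - fth w u * inverse u ^ 2"
  by (simp add: fth_def dfr_inverse sum_distrib_left sum_distrib_right sum_negf ac_simps)

definition Qterm :: "real^'n \<Rightarrow> complex \<Rightarrow> 'n::finite mono \<Rightarrow> 'n weyl" where
  "Qterm w c a = (\<Sum>i\<in>UNIV. Poly_Mapping.single (a + unitv i, unitv i) (c * complex_of_real (w $ i)))
      + Poly_Mapping.single (a, 0) (c * complex_of_real (wtm w a))"

definition Qw :: "real^'n \<Rightarrow> 'n::finite mpoly \<Rightarrow> 'n weyl" where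
  "Qw w h = (\<Sum>a\<in>Poly_Mapping.keys h. Qterm w (Poly_Mapping.lookup h a) a)"

lemma xpow_unitv: "fr.xpow (unitv i) = xf i"
  by (simp add: xpow_emb xmono_def)

lemma act_Qterm: "fr.act (Qterm w c a) u = Cf c * fr.xpow a * fth w u + Cf (c * complex_of_real (wtm w a)) * fr.xpow a * u"
  by (simp add: Qterm_def fr.act_add fr.act_sum fr.act_single fr.mono_def fr.xpow_add xpow_unitv fr.Dpow_unitv
      fth_def fr.C_mult sum_distrib_left ac_simps)

lemma emb_sum_single: "emb (\<Sum>a\<in>S. Poly_Mapping.single a (f a)) = (\<Sum>a\<in>S. Cf (f a) * fr.xpow a)"
  by (simp only: emb_sum) (rule sum.cong[OF refl], rule emb_single)

lemma act_Qw: "fr.act (Qw w h) u = emb h * fth w u + emb (thetap w h) * u"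
proof -
  have E1: "emb h = (\<Sum>a\<in>Poly_Mapping.keys h. Cf (Poly_Mapping.lookup h a) * fr.xpow a)"
    by (subst mp_sum_mono[of h]) (rule emb_sum_single)
  have E2: "emb (thetap w h) = (\<Sum>a\<in>Poly_Mapping.keys h. Cf (Poly_Mapping.lookup h a * complex_of_real (wtm w a)) * fr.xpow a)"
    unfolding thetap_def by (rule emb_sum_single)
  have "fr.act (Qw w h) u = (\<Sum>a\<in>Poly_Mapping.keys h. Cf (Poly_Mapping.lookup h a) * fr.xpow a * fth w u
       + Cf (Poly_Mapping.lookup h a * complex_of_real (wtm w a)) * fr.xpow a * u)"
    by (simp only: Qw_def fr.act_sum act_Qterm)
  also have "\<dots> = emb h * fth w u + emb (thetap w h) * u"
    unfolding E1 E2 by (simp only: sum.distrib sum_distrib_right)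
  finally show ?thesis .
qed

lemma emb_ne: "p \<noteq> 0 \<Longrightarrow> emb p \<noteq> 0" using emb_eq_0 by auto

lemma Qw_ann: fixes g :: "'n::finite mpoly" assumes g: "g \<noteq> 0" shows "Qw w g \<in> Ann_inv_pow g 1"
proof -
  have G: "emb g \<noteq> 0" by (rule emb_ne[OF g])
  have fi: "fth w (inverse (emb g)) = - emb (thetap w g) * inverse (emb g) ^ 2"
    unfolding fth_inverse[OF G] fth_emb ..
  have "fr.act (Qw w g) (inverse (emb g)) = 0"
    unfolding act_Qw fi using G by (simp add: power2_eq_square field_simps)
  then show ?thesis using g by (simp add: ann_iff)
qed

lemma fth_one: "fth w 1 = 0" by (simp add: fth_def)

lemma fth_xf: "fth w (xf j) = Cf (complex_of_real (w $ j)) * xf j"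
proof -
  have "fth w (xf j) = (\<Sum>i\<in>UNIV. if i = j then Cf (complex_of_real (w $ i)) * xf i else 0)"
    unfolding fth_def by (rule sum.cong) (auto simp: fr.D_x)
  then show ?thesis by simp
qed

lemma Qw_nonzero: fixes h :: "'n::finite mpoly" assumes h: "h \<noteq> 0" and w: "w \<noteq> 0" shows "Qw w h \<noteq> 0"
proof
  assume Q: "Qw w h = 0"
  obtain j where j: "w $ j \<noteq> 0" using w by (metis vec_eq_iff zero_index)
  have "fr.act (Qw w h) 1 = 0" using Q by simp
  then have t0: "emb (thetap w h) = 0" by (simp add: act_Qw fth_one)
  have "fr.act (Qw w h) (xf j) = 0" using Q by simp
  then have "emb h * (Cf (complex_of_real (w $ j)) * xf j) = 0" by (simp add: act_Qw fth_xf t0)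
  moreover have "emb h \<noteq> 0" by (rule emb_ne[OF h])
  moreover have "Cf (complex_of_real (w $ j)) \<noteq> 0" using j
    by (intro emb_ne) (metis lookup_single_eq lookup_zero of_real_eq_0_iff)
  moreover have "xf j \<noteq> (0 :: 'n mp fract)"
    by (intro emb_ne) (metis lookup_single_eq lookup_zero one_neq_zero)
  ultimately show False by (metis mult_eq_0_iff)
qed

definition wfilt :: "real^'n \<Rightarrow> real \<Rightarrow> 'n::finite weyl \<Rightarrow> 'n weyl" where
  "wfilt w M P = (\<Sum>k\<in>{k\<in>Poly_Mapping.keys P. wt w k = M}. Poly_Mapping.single k (Poly_Mapping.lookup P k))"

lemma lookup_wfilt: "Poly_Mapping.lookup (wfilt w M P) k = (if wt w k = M then Poly_Mapping.lookup P k else 0)"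
  by (simp add: wfilt_def lookup_sum lookup_single when_def in_keys_iff split: if_splits)

lemma init_form_wfilt: "init_form w P = wfilt w (Max (wt w ` Poly_Mapping.keys P)) P"
  by (simp add: init_form_def wfilt_def Let_def)

lemma wfilt_add: "wfilt w M (P + Q) = wfilt w M P + wfilt w M Q"
  by (rule poly_mapping_eqI) (simp add: lookup_wfilt lookup_add)
lemma wfilt_zero [simp]: "wfilt w M 0 = 0"
  by (rule poly_mapping_eqI) (simp add: lookup_wfilt)
lemma wfilt_sum: "wfilt w M (sum g S) = (\<Sum>x\<in>S. wfilt w M (g x))"
  by (rule poly_mapping_eqI) (simp add: lookup_wfilt lookup_sum)
lemma wfilt_single: "wfilt w M (Poly_Mapping.single k c) = (if wt w k = M then Poly_Mapping.single k c else 0)"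
  by (rule poly_mapping_eqI) (simp add: lookup_wfilt lookup_single when_def)

lemma wtm_unitv: "wtm w (unitv i) = w $ i"
proof -
  have "wtm w (unitv i) = (\<Sum>j\<in>UNIV. if i = j then w $ j else 0)"
    unfolding wtm_sum by (rule sum.cong) (auto simp: lookup_unitv)
  then show ?thesis by simp
qed

lemma wt_Qkeys: "wt w (a + unitv i, unitv i) = - wtm w a" "wt w (a, 0) = - wtm w a"
  by (simp_all add: wt_conv wtm_add)

lemma wfilt_Qterm: "wfilt w M (Qterm w' c a) = (if - wtm w a = M then Qterm w' c a else 0)"
  by (simp add: Qterm_def wfilt_add wfilt_sum wfilt_single wt_Qkeys)

lemma keys_Qterm: "Poly_Mapping.keys (Qterm w' c a) \<subseteq> {(a + unitv i, unitv i) | i. True} \<union> {(a, 0)}"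
proof -
  let ?A = "\<Sum>i\<in>UNIV. Poly_Mapping.single (a + unitv i, unitv i) (c * complex_of_real (w' $ i))"
  let ?B = "Poly_Mapping.single (a, 0) (c * complex_of_real (wtm w' a))"
  have "Poly_Mapping.keys ?A \<subseteq> (\<Union>i\<in>UNIV. Poly_Mapping.keys (Poly_Mapping.single (a + unitv i, unitv i) (c * complex_of_real (w' $ i))))"
    by (rule keys_sum)
  also have "\<dots> \<subseteq> {(a + unitv i, unitv i) | i. True}" by auto
  finally have A: "Poly_Mapping.keys ?A \<subseteq> {(a + unitv i, unitv i) | i. True}" .
  have B: "Poly_Mapping.keys ?B \<subseteq> {(a, 0)}" by auto
  have "Poly_Mapping.keys (?A + ?B) \<subseteq> Poly_Mapping.keys ?A \<union> Poly_Mapping.keys ?B" by (rule keys_add)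
  then show ?thesis unfolding Qterm_def using A B by blast
qed

lemma keys_Qw: assumes k: "k \<in> Poly_Mapping.keys (Qw w' g)" shows "\<exists>a\<in>Poly_Mapping.keys g. wt w k = - wtm w a"
proof -
  have "Poly_Mapping.keys (Qw w' g) \<subseteq> (\<Union>a\<in>Poly_Mapping.keys g. Poly_Mapping.keys (Qterm w' (Poly_Mapping.lookup g a) a))"
    unfolding Qw_def by (rule keys_sum)
  then obtain a where a: "a \<in> Poly_Mapping.keys g" "k \<in> Poly_Mapping.keys (Qterm w' (Poly_Mapping.lookup g a) a)"
    using k by blast
  then have "k \<in> {(a + unitv i, unitv i) | i. True} \<union> {(a, 0)}" using keys_Qterm by blast
  then have "wt w k = - wtm w a" using wt_Qkeys by auto
  then show ?thesis using a(1) by blast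
qed

lemma init_Qw: fixes g :: "'n::finite mpoly" assumes g: "g \<noteq> 0" and w: "w \<noteq> 0"
  shows "init_form w (Qw w g) = Qw w (face_part g (tau g w))"
proof -
  define od where "od = ord_f g w"
  have od: "od = Min (wtm w ` Poly_Mapping.keys g)" using ord_f_Min[OF g] od_def by simp
  have W: "wfilt w (- od) (Qw w g) = Qw w (wpart w od g)"
  proof -
    have "wfilt w (- od) (Qw w g) = (\<Sum>a\<in>Poly_Mapping.keys g. if wtm w a = od then Qterm w (Poly_Mapping.lookup g a) a else 0)"
      by (simp add: Qw_def wfilt_sum wfilt_Qterm)
    also have "\<dots> = (\<Sum>a\<in>{a\<in>Poly_Mapping.keys g. wtm w a = od}. Qterm w (Poly_Mapping.lookup g a) a)"
      by (simp add: sum.inter_filter)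
    also have "\<dots> = Qw w (wpart w od g)"
    proof -
      have k: "Poly_Mapping.keys (wpart w od g) = {a\<in>Poly_Mapping.keys g. wtm w a = od}"
        by (auto simp: in_keys_iff lookup_wpart split: if_splits)
      show ?thesis unfolding Qw_def k by (intro sum.cong refl) (simp add: lookup_wpart)
    qed
    finally show ?thesis .
  qed
  have nz: "Qw w (wpart w od g) \<noteq> 0"
    using Qw_nonzero[OF _ w] wpart_Min_nonzero[OF g] od by auto
  have M: "Max (wt w ` Poly_Mapping.keys (Qw w g)) = - od"
  proof (rule Max_eqI)
    show "finite (wt w ` Poly_Mapping.keys (Qw w g))" by simp
  next
    fix y assume "y \<in> wt w ` Poly_Mapping.keys (Qw w g)"
    then obtain k where k: "k \<in> Poly_Mapping.keys (Qw w g)" "y = wt w k" by auto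
    then obtain a where "a \<in> Poly_Mapping.keys g" "wt w k = - wtm w a" using keys_Qw by blast
    then show "y \<le> - od" using k od by simp
  next
    obtain k where "Poly_Mapping.lookup (wfilt w (- od) (Qw w g)) k \<noteq> 0"
      using nz W by (metis lookup_zero poly_mapping_eqI)
    then have "k \<in> Poly_Mapping.keys (Qw w g)" "wt w k = - od"
      by (auto simp: lookup_wfilt in_keys_iff split: if_splits)
    then show "- od \<in> wt w ` Poly_Mapping.keys (Qw w g)" by force
  qed
  have fp: "face_part g (tau g w) = wpart w od g" using face_part_wpart od_def by simp
  show ?thesis unfolding init_form_wfilt M fp by (rule W)
qed

lemma core:
  fixes g :: "'n::finite mpoly"
  assumes g: "g \<noteq> 0"
    and eq: "init_ideal w (Ann_inv_pow g 1) = init_ideal w' (Ann_inv_pow g 1)"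
    and a: "a \<in> Poly_Mapping.keys g" "wtm w a = ord_f g w"
  shows "wtm w' a = ord_f g w'"
proof (cases "w' = 0")
  case True
  have "wtm w' ` Poly_Mapping.keys g = {0}" using True a(1) by (auto simp: wtm_def)
  then show ?thesis using True ord_f_Min[OF g, of w'] by (simp add: wtm_def)
next
  case w': False
  define G where "G = face_part g (tau g w)"
  define g' where "g' = face_part g (tau g w')"
  define o' where "o' = ord_f g w'"
  have G0: "G \<noteq> 0" using face_part_nonzero[OF g] G_def by simp
  have g'0: "g' \<noteq> 0" using face_part_nonzero[OF g] g'_def by simp
  have g'w: "g' = wpart w' o' g" using face_part_wpart g'_def o'_def by simp
  have Gw: "G = wpart w (ord_f g w) g" using face_part_wpart G_def by simp
  have Qa: "Qw w' g \<in> Ann_inv_pow g 1" by (rule Qw_ann[OF g])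
  have Q0: "Qw w' g \<noteq> 0" by (rule Qw_nonzero[OF g w'])
  have "Qw w' g' \<in> init_ideal w' (Ann_inv_pow g 1)"
  proof -
    have "init_form w' (Qw w' g) \<in> {init_form w' P |P. P \<in> Ann_inv_pow g 1 \<and> P \<noteq> 0}"
      using Qa Q0 by blast
    then show ?thesis unfolding init_ideal_def init_Qw[OF g w'] g'_def by (rule left_ideal_gen.gen)
  qed
  then have "Qw w' g' \<in> init_ideal w (Ann_inv_pow g 1)" using eq by simp
  moreover have "init_ideal w (Ann_inv_pow g 1) \<subseteq> Ann_inv_pow G 1"
    unfolding init_ideal_def
  proof (rule Ann_lig[OF G0])
    show "{init_form w P |P. P \<in> Ann_inv_pow g 1 \<and> P \<noteq> 0} \<subseteq> Ann_inv_pow G 1"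
      using ann_init[OF g] G_def by blast
  qed
  ultimately have "Qw w' g' \<in> Ann_inv_pow G 1" by blast
  then have act0: "fr.act (Qw w' g') (inverse (emb G)) = 0" using G0 by (simp add: ann_iff)
  have EG: "emb G \<noteq> 0" by (rule emb_ne[OF G0])
  have th': "thetap w' g' = cmul (complex_of_real o') g'"
    by (rule poly_mapping_eqI) (simp add: lookup_thetap g'w lookup_wpart)
  have fi: "fth w' (inverse (emb G)) = - emb (thetap w' G) * inverse (emb G) ^ 2"
    unfolding fth_inverse[OF EG] fth_emb ..
  have "emb g' * (- emb (thetap w' G) * inverse (emb G) ^ 2) + Cf (complex_of_real o') * emb g' * inverse (emb G) = 0"
    using act0 unfolding act_Qw fi th' emb_cmul by simp
  then have "emb g' * (Cf (complex_of_real o') * emb G - emb (thetap w' G)) = 0"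
    using EG by (simp add: field_simps power2_eq_square)
  then have "emb (g' * (cmul (complex_of_real o') G - thetap w' G)) = 0"
    by (simp add: emb_mult emb_diff emb_cmul)
  then have "g' * (cmul (complex_of_real o') G - thetap w' G) = 0" by (simp add: emb_eq_0)
  then have "cmul (complex_of_real o') G - thetap w' G = 0" using mp_mult_cancel[OF g'0] by blast
  then have "Poly_Mapping.lookup (cmul (complex_of_real o') G) a = Poly_Mapping.lookup (thetap w' G) a" by simp
  moreover have "Poly_Mapping.lookup G a = Poly_Mapping.lookup g a" using a by (simp add: Gw lookup_wpart)
  moreover have "Poly_Mapping.lookup g a \<noteq> 0" using a by (simp add: in_keys_iff)
  ultimately have "complex_of_real o' = complex_of_real (wtm w' a)" by (simp add: lookup_thetap)
  then show ?thesis by (simp add: o'_def)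
qed

section \<open>geometry\<close>

lemma ord_le: assumes f: "f \<noteq> 0" and v: "v \<in> newton f" shows "ord_f f w \<le> inner v w"
proof -
  let ?m = "Min (wtm w ` Poly_Mapping.keys f)"
  have "convex {u. ?m \<le> inner u w}"
    using convex_halfspace_ge[where a=w and b="?m"] by (simp add: inner_commute)
  moreover have "vec_of ` Poly_Mapping.keys f \<subseteq> {u. ?m \<le> inner u w}"
    by (auto simp: wtm_def)
  ultimately have "newton f \<subseteq> {u. ?m \<le> inner u w}"
    unfolding newton_def by (intro hull_minimal)
  then show ?thesis using v ord_f_Min[OF f] by auto
qed

lemma ord_attained: assumes f: "f \<noteq> 0" shows "\<exists>a\<in>Poly_Mapping.keys f. wtm w a = ord_f f w"
  using Min_wtm_props(2)[OF f] ord_f_Min[OF f] by simp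

lemma tau_face: assumes f: "f \<noteq> 0" shows "tau f w face_of newton f" "tau f w \<noteq> {}"
proof -
  have "tau f w = newton f \<inter> {x. w \<bullet> x = ord_f f w}" by (auto simp: tau_def inner_commute)
  moreover have "(newton f \<inter> {x. w \<bullet> x = ord_f f w}) face_of newton f"
    by (rule face_of_Int_supporting_hyperplane_ge) (use ord_le[OF f] in \<open>auto simp: newton_def inner_commute\<close>)
  ultimately show "tau f w face_of newton f" by simp
  obtain a where "a \<in> Poly_Mapping.keys f" "wtm w a = ord_f f w" using ord_attained[OF f] by blast
  then have "vec_of a \<in> tau f w" by (auto simp: tau_def vec_of_in_newton wtm_def)
  then show "tau f w \<noteq> {}" by auto
qed

lemma tau_hull: assumes f: "f \<noteq> 0"
  shows "tau f w = convex hull (vec_of ` {a\<in>Poly_Mapping.keys f. wtm w a = ord_f f w})"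
proof -
  let ?V = "vec_of ` Poly_Mapping.keys f"
  have T: "tau f w face_of convex hull ?V" using tau_face[OF f] by (simp add: newton_def)
  have cV: "compact ?V" by (rule finite_imp_compact) simp
  obtain S' where S': "S' \<subseteq> ?V" "tau f w = convex hull S'"
    by (rule face_of_convex_hull_subset[OF cV T])
  have sub: "tau f w \<inter> ?V = vec_of ` {a\<in>Poly_Mapping.keys f. wtm w a = ord_f f w}"
    by (auto simp: tau_def vec_of_in_newton wtm_def)
  have "S' \<subseteq> tau f w \<inter> ?V" using S' hull_subset[of S' convex] by blast
  then have "tau f w \<subseteq> convex hull (tau f w \<inter> ?V)" using S'(2) hull_mono by metis
  moreover have "convex hull (tau f w \<inter> ?V) \<subseteq> tau f w"
    using face_of_imp_convex[OF T] by (simp add: hull_minimal)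
  ultimately have "tau f w = convex hull (tau f w \<inter> ?V)" by (rule subset_antisym)
  also have "\<dots> = convex hull (vec_of ` {a\<in>Poly_Mapping.keys f. wtm w a = ord_f f w})" by (simp only: sub)
  finally show ?thesis .
qed

lemma normal_cone_closed: assumes f: "f \<noteq> 0" and T: "T \<subseteq> newton f" shows "closed (normal_cone f T)"
proof -
  have eq: "normal_cone f T = (\<Inter>u\<in>T. \<Inter>v\<in>newton f. {w. inner u w \<le> inner v w})"
  proof (intro set_eqI iffI)
    fix w assume "w \<in> normal_cone f T"
    then show "w \<in> (\<Inter>u\<in>T. \<Inter>v\<in>newton f. {w. inner u w \<le> inner v w})"
      using ord_le[OF f] by (auto simp: normal_cone_def)
  next
    fix w assume w: "w \<in> (\<Inter>u\<in>T. \<Inter>v\<in>newton f. {w. inner u w \<le> inner v w})"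
    obtain a where a: "a \<in> Poly_Mapping.keys f" "wtm w a = ord_f f w" using ord_attained[OF f] by blast
    have "inner u w = ord_f f w" if u: "u \<in> T" for u
    proof -
      have "inner u w \<le> inner (vec_of a) w" using w u vec_of_in_newton[OF a(1)] by blast
      moreover have "ord_f f w \<le> inner u w" using ord_le[OF f] u T by blast
      ultimately show ?thesis using a(2) by (simp add: wtm_def)
    qed
    then show "w \<in> normal_cone f T" by (simp add: normal_cone_def)
  qed
  show ?thesis unfolding eq
    by (intro closed_INT ballI closed_Collect_le) (auto intro: continuous_intros)
qed

theorem part1:
  fixes f :: "('n::finite) mpoly" and l :: nat
  assumes f: "f \<noteq> 0" and F: "is_small_groebner_fan (Ann_inv_pow f l) F"
  shows "refines F (newton_fan (f ^ l))"
proof -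
  define g where "g = f ^ l"
  have g: "g \<noteq> 0" using mp_power_nonzero[OF f] g_def by simp
  have I: "Ann_inv_pow f l = Ann_inv_pow g 1" using Ann_pow_eq[OF f] g_def by simp
  have F1: "is_fan F" using F unfolding is_small_groebner_fan_def by (elim conjE)
  have F2: "\<Union>F = UNIV" using F unfolding is_small_groebner_fan_def by (elim conjE)
  have F3: "\<forall>C\<in>F. \<forall>w\<in>rel_interior C. \<forall>w'\<in>rel_interior C. init_ideal w (Ann_inv_pow f l) = init_ideal w' (Ann_inv_pow f l)"
    using F unfolding is_small_groebner_fan_def by (elim conjE)
  have const: "\<And>C w w'. C \<in> F \<Longrightarrow> w \<in> rel_interior C \<Longrightarrow> w' \<in> rel_interior C \<Longrightarrow>
       init_ideal w (Ann_inv_pow g 1) = init_ideal w' (Ann_inv_pow g 1)"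
    using F3 unfolding I by blast
  have Fne: "{} \<notin> F" using F1 unfolding is_fan_def by (elim conjE)
  have Fpoly: "\<forall>C\<in>F. polyhedron C \<and> cone C" using F1 unfolding is_fan_def by (elim conjE)
  have cover: "\<Union>(newton_fan g) = UNIV"
  proof -
    have "w \<in> normal_cone g (tau g w)" for w by (simp add: normal_cone_def tau_def)
    moreover have "normal_cone g (tau g w) \<in> newton_fan g" for w
      using tau_face[OF g] unfolding newton_fan_def by blast
    ultimately show ?thesis by blast
  qed
  have "\<exists>D\<in>newton_fan g. C \<subseteq> D" if C: "C \<in> F" for C
  proof -
    have pc: "polyhedron C" "C \<noteq> {}" using Fpoly Fne C by auto
    have cvx: "convex C" by (rule polyhedron_imp_convex[OF pc(1)])
    have "rel_interior C \<noteq> {}" using rel_interior_eq_empty[OF cvx] pc(2) by simp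
    then obtain w0 where w0: "w0 \<in> rel_interior C" by blast
    define T where "T = tau g w0"
    have key: "\<And>w. w \<in> rel_interior C \<Longrightarrow> tau g w = T"
    proof -
      fix w assume w: "w \<in> rel_interior C"
      have e: "init_ideal w (Ann_inv_pow g 1) = init_ideal w0 (Ann_inv_pow g 1)" using const[OF C w w0] .
      have "{a\<in>Poly_Mapping.keys g. wtm w a = ord_f g w} = {a\<in>Poly_Mapping.keys g. wtm w0 a = ord_f g w0}"
        using core[OF g e] core[OF g e[symmetric]] by blast
      then show "tau g w = T" unfolding T_def tau_hull[OF g] by simp
    qed
    have riD: "rel_interior C \<subseteq> normal_cone g T"
    proof
      fix w assume "w \<in> rel_interior C"
      then have "tau g w = T" by (rule key)
      moreover have "w \<in> normal_cone g (tau g w)" by (simp add: normal_cone_def tau_def)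
      ultimately show "w \<in> normal_cone g T" by simp
    qed
    have cl: "closed (normal_cone g T)"
      by (rule normal_cone_closed[OF g]) (unfold T_def, rule face_of_imp_subset, rule tau_face(1)[OF g])
    have "C \<subseteq> closure C" by (rule closure_subset)
    also have "\<dots> = closure (rel_interior C)" using convex_closure_rel_interior[OF cvx] by simp
    also have "\<dots> \<subseteq> normal_cone g T" using riD cl by (rule closure_minimal)
    finally have "C \<subseteq> normal_cone g T" .
    moreover have "normal_cone g T \<in> newton_fan g"
      using tau_face[OF g] unfolding newton_fan_def T_def by blast
    ultimately show ?thesis by blast
  qed
  then show ?thesis unfolding refines_def g_def[symmetric] using F2 cover by auto
qed

theorem mainTheorem7:
  fixes f :: "('n::finite) mpoly" and l :: nat
  assumes "f \<noteq> 0"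
  shows "(\<forall>F. is_small_groebner_fan (Ann_inv_pow f l) F \<longrightarrow> refines F (newton_fan (f ^ l)))
       \<and> (\<forall>w::real^'n. w \<noteq> 0 \<longrightarrow>
            bfun (Ann_inv_pow (face_part f (tau f w)) l) w dvd bfun (Ann_inv_pow f l) w)"
  using part1[OF assms] part2[OF assms] by blast

end
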